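(* Let $(X,\mathcal{A},p)$ be a standard Borel probability space. The assignments $e\mapsto\mathcal{I}_e$ and $\mathcal{B}\mapsto e_\mathcal{B}$ are mutually inverse order-preserving bijections between the partially ordered set of ($p$-a.s. classes of) measure-preserving $p$-a.s. idempotent Markov kernels on $(X,\mathcal{A},p)$ and the set of $p$-complete sub-$\sigma$-algebras of $\mathcal{A}$ ordered by inclusion.
   Context: Kernels are identified up to $p$-a.s. equality, with composition $(\ell\circ k)(C\mid x)=\int\ell(C\mid y)k(dy\mid x)$; $e$ is $p$-a.s. idempotent if $e\circ e=e$ a.s.; idempotents are ordered by $e_1\le e_2$ iff $e_1\circ e_2=e_2\circ e_1=e_1$ a.s. $\mathcal{I}_e=\{B\in\mathcal{A}: e(B\mid x)=1_B(x)$ for $p$-a.a. $x\}$. $e_\mathcal{B}(A\mid x)=\mathbb{P}[A\mid\mathcal{B}](x)$ (regular conditional probability). A sub-$\sigma$-algebra $\mathcal{B}\subseteq\mathcal{A}$ is $p$-complete if it contains every $A\in\mathcal{A}$ with $p(A)=0$. *)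

theory Defs
  imports "HOL-Probability.Probability"
begin

definition standard_borel :: "'a measure \<Rightarrow> bool" where
  "standard_borel M \<longleftrightarrow>
     (\<exists>T. topspace T = space M \<and> completely_metrizable_space T \<and> separable_space T \<and>
          sets M = sigma_sets (space M) {U. openin T U})"

definition markov_kernel :: "'a measure \<Rightarrow> ('a \<Rightarrow> 'a measure) \<Rightarrow> bool" where
  "markov_kernel M k \<longleftrightarrow> k \<in> M \<rightarrow>\<^sub>M prob_algebra M"

definition kcomp :: "('a \<Rightarrow> 'a measure) \<Rightarrow> ('a \<Rightarrow> 'a measure) \<Rightarrow> ('a \<Rightarrow> 'a measure)" where
  "kcomp l k = (\<lambda>x. bind (k x) l)"

definition kernel_ae_eq :: "'a measure \<Rightarrow> ('a \<Rightarrow> 'a measure) \<Rightarrow> ('a \<Rightarrow> 'a measure) \<Rightarrow> bool" where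
  "kernel_ae_eq M k l \<longleftrightarrow> (AE x in M. k x = l x)"

definition measure_preserving_kernel :: "'a measure \<Rightarrow> ('a \<Rightarrow> 'a measure) \<Rightarrow> bool" where
  "measure_preserving_kernel M k \<longleftrightarrow> bind M k = M"

definition ae_idempotent :: "'a measure \<Rightarrow> ('a \<Rightarrow> 'a measure) \<Rightarrow> bool" where
  "ae_idempotent M e \<longleftrightarrow> kernel_ae_eq M (kcomp e e) e"

definition mp_idempotent :: "'a measure \<Rightarrow> ('a \<Rightarrow> 'a measure) \<Rightarrow> bool" where
  "mp_idempotent M e \<longleftrightarrow> markov_kernel M e \<and> measure_preserving_kernel M e \<and> ae_idempotent M e"

definition idem_le :: "'a measure \<Rightarrow> ('a \<Rightarrow> 'a measure) \<Rightarrow> ('a \<Rightarrow> 'a measure) \<Rightarrow> bool" where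
  "idem_le M e1 e2 \<longleftrightarrow> kernel_ae_eq M (kcomp e1 e2) e1 \<and> kernel_ae_eq M (kcomp e2 e1) e1"

definition inv_sets :: "'a measure \<Rightarrow> ('a \<Rightarrow> 'a measure) \<Rightarrow> 'a set set" where
  "inv_sets M e = {B \<in> sets M. AE x in M. measure (e x) B = indicator B x}"

definition p_complete_subalgebra :: "'a measure \<Rightarrow> 'a set set \<Rightarrow> bool" where
  "p_complete_subalgebra M B \<longleftrightarrow>
     sigma_algebra (space M) B \<and> B \<subseteq> sets M \<and> (\<forall>A \<in> sets M. measure M A = 0 \<longrightarrow> A \<in> B)"

definition is_rcp :: "'a measure \<Rightarrow> 'a set set \<Rightarrow> ('a \<Rightarrow> 'a measure) \<Rightarrow> bool" where
  "is_rcp M B e \<longleftrightarrow> markov_kernel M e \<and>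
     (\<forall>A \<in> sets M. AE x in M. measure (e x) A = real_cond_exp M (sigma (space M) B) (indicator A) x)"

end

theory Submission
  imports Defs
begin

lemma mk_facts:
  assumes "markov_kernel M e" "x \<in> space M"
  shows "prob_space (e x)" "sets (e x) = sets M" "space (e x) = space M"
  using measurable_space[OF assms(1)[unfolded markov_kernel_def] assms(2)]
  by (auto simp: space_prob_algebra dest: sets_eq_imp_space_eq)

lemma mk_emeq: "markov_kernel M e \<Longrightarrow> x \<in> space M \<Longrightarrow> emeasure (e x) A = ennreal (measure (e x) A)"
  by (metis mk_facts(1) prob_space.finite_measure finite_measure.emeasure_eq_measure)

lemma mk_sub: "markov_kernel M e \<Longrightarrow> e \<in> M \<rightarrow>\<^sub>M subprob_algebra M"
  unfolding markov_kernel_def by (rule measurable_prob_algebraD)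

lemma emeasure_bind_density:
  assumes e: "markov_kernel M e" and C: "C \<in> sets M" and A: "A \<in> sets M" and ne: "space M \<noteq> {}"
  shows "emeasure (bind (density M (indicator C)) e) A = (\<integral>\<^sup>+x. indicator C x * emeasure (e x) A \<partial>M)"
proof -
  have e': "e \<in> density M (indicator C) \<rightarrow>\<^sub>M subprob_algebra M"
    using mk_sub[OF e] by (simp cong: measurable_cong_sets)
  have "emeasure (bind (density M (indicator C)) e) A = (\<integral>\<^sup>+x. emeasure (e x) A \<partial>density M (indicator C))"
    by (rule emeasure_bind) (use ne e' A in auto)
  also have "\<dots> = (\<integral>\<^sup>+x. indicator C x * emeasure (e x) A \<partial>M)"
    using C A mk_sub[OF e] by (subst nn_integral_density) auto
  finally show ?thesis .
qed

lemma sets_bind_density: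
  assumes e: "markov_kernel M e" and ne: "space M \<noteq> {}"
  shows "sets (bind (density M (indicator C)) e) = sets M"
  using mk_facts[OF e] ne by (subst sets_bind[where N=M]) auto

lemma emeasure_density_ind:
  assumes C: "C \<in> sets M" and A: "A \<in> sets M"
  shows "emeasure (density M (indicator C)) A = emeasure M (A \<inter> C)"
proof -
  have "emeasure (density M (indicator C)) A = (\<integral>\<^sup>+x. indicator C x * indicator A x \<partial>M)"
    using C A by (subst emeasure_density) (auto intro!: nn_integral_cong simp: mult.commute)
  also have "\<dots> = (\<integral>\<^sup>+x. indicator (A \<inter> C) x \<partial>M)"
    by (intro nn_integral_cong) (auto split: split_indicator)
  also have "\<dots> = emeasure M (A \<inter> C)" using A C by simp
  finally show ?thesis .
qed

lemma dens_iff: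
  assumes e: "markov_kernel M e" and C: "C \<in> sets M" and ne: "space M \<noteq> {}"
  shows "bind (density M (indicator C)) e = density M (indicator C) \<longleftrightarrow>
    (\<forall>A\<in>sets M. (\<integral>\<^sup>+x. indicator C x * emeasure (e x) A \<partial>M) = emeasure M (A \<inter> C))"
proof
  assume eq: "bind (density M (indicator C)) e = density M (indicator C)"
  show "\<forall>A\<in>sets M. (\<integral>\<^sup>+x. indicator C x * emeasure (e x) A \<partial>M) = emeasure M (A \<inter> C)"
  proof
    fix A assume A: "A \<in> sets M"
    have "(\<integral>\<^sup>+x. indicator C x * emeasure (e x) A \<partial>M) = emeasure (bind (density M (indicator C)) e) A"
      using emeasure_bind_density[OF e C A ne] by simp
    also have "\<dots> = emeasure M (A \<inter> C)" using eq emeasure_density_ind[OF C A] by simp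
    finally show "(\<integral>\<^sup>+x. indicator C x * emeasure (e x) A \<partial>M) = emeasure M (A \<inter> C)" .
  qed
next
  assume H: "\<forall>A\<in>sets M. (\<integral>\<^sup>+x. indicator C x * emeasure (e x) A \<partial>M) = emeasure M (A \<inter> C)"
  show "bind (density M (indicator C)) e = density M (indicator C)"
  proof (rule measure_eqI)
    show "sets (bind (density M (indicator C)) e) = sets (density M (indicator C))"
      using sets_bind_density[OF e ne] by simp
  next
    fix A assume "A \<in> sets (bind (density M (indicator C)) e)"
    then have A: "A \<in> sets M" using sets_bind_density[OF e ne] by simp
    show "emeasure (bind (density M (indicator C)) e) A = emeasure (density M (indicator C)) A"
      using emeasure_bind_density[OF e C A ne] H A emeasure_density_ind[OF C A] by simp
  qed
qed

lemma dens_gen: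
  assumes e: "markov_kernel M e" and C: "C \<in> sets M" and ne: "space M \<noteq> {}"
    and G: "Int_stable G" "G \<subseteq> Pow (space M)" "sets M = sigma_sets (space M) G" "space M \<in> G"
    and H: "\<And>A. A \<in> G \<Longrightarrow> (\<integral>\<^sup>+x. indicator C x * emeasure (e x) A \<partial>M) = emeasure M (A \<inter> C)"
    and fin: "emeasure M C \<noteq> \<infinity>"
  shows "bind (density M (indicator C)) e = density M (indicator C)"
proof (rule measure_eqI_generator_eq[OF G(1,2), where A="\<lambda>_. space M"])
  fix A assume A: "A \<in> G"
  then have A': "A \<in> sets M" using G(3) by auto
  show "emeasure (bind (density M (indicator C)) e) A = emeasure (density M (indicator C)) A"
    using emeasure_bind_density[OF e C A' ne] H[OF A] emeasure_density_ind[OF C A'] by simp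
next
  show "sets (bind (density M (indicator C)) e) = sigma_sets (space M) G"
    using sets_bind_density[OF e ne] G(3) by simp
  show "sets (density M (indicator C)) = sigma_sets (space M) G" using G(3) by simp
  show "range (\<lambda>_. space M) \<subseteq> G" using G(4) by auto
  show "(\<Union>i. space M) = space M" by simp
  show "emeasure (bind (density M (indicator C)) e) (space M) \<noteq> \<infinity>" for i :: nat
    using emeasure_bind_density[OF e C _ ne, of "space M"] H[OF G(4)] fin
    by (simp add: Int_absorb1 sets.sets_into_space C)
qed

lemma int01:
  assumes N: "prob_space N" and f: "f \<in> borel_measurable N" and b: "\<And>x. x \<in> space N \<Longrightarrow> 0 \<le> f x \<and> f x \<le> 1"
  shows "integrable N f" "0 \<le> (\<integral>x. f x \<partial>N)" "(\<integral>x. f x \<partial>N) \<le> 1"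
    "(\<integral>\<^sup>+x. ennreal (f x) \<partial>N) = ennreal (\<integral>x. f x \<partial>N)"
proof -
  interpret N: prob_space N by (rule N)
  show I: "integrable N f"
    by (rule N.integrable_const_bound[where B=1]) (use b f in \<open>auto intro!: AE_I2\<close>)
  show "0 \<le> (\<integral>x. f x \<partial>N)" using b by (intro integral_nonneg_AE AE_I2) auto
  have "(\<integral>x. f x \<partial>N) \<le> (\<integral>x. 1 \<partial>N)" using b I by (intro integral_mono) auto
  then show "(\<integral>x. f x \<partial>N) \<le> 1" by (simp add: N.prob_space)
  show "(\<integral>\<^sup>+x. ennreal (f x) \<partial>N) = ennreal (\<integral>x. f x \<partial>N)"
    using b I by (intro nn_integral_eq_integral AE_I2) auto
qed

definition cgen :: "'a measure \<Rightarrow> 'a set set \<Rightarrow> bool" where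
  "cgen M G \<longleftrightarrow> countable G \<and> Int_stable G \<and> G \<subseteq> Pow (space M) \<and>
     sets M = sigma_sets (space M) G \<and> space M \<in> G"

lemma meas_eq_gen:
  assumes G: "cgen M G" and N1: "prob_space N1" "sets N1 = sets M" and N2: "prob_space N2" "sets N2 = sets M"
    and eq: "\<And>A. A \<in> G \<Longrightarrow> emeasure N1 A = emeasure N2 A"
  shows "N1 = N2"
proof (rule measure_eqI_generator_eq[where E=G and \<Omega>="space M" and A="\<lambda>_. space M"])
  show "Int_stable G" "G \<subseteq> Pow (space M)" using G unfolding cgen_def by auto
  show "sets N1 = sigma_sets (space M) G" "sets N2 = sigma_sets (space M) G"
    using G N1 N2 unfolding cgen_def by auto
  show "range (\<lambda>_. space M) \<subseteq> G" using G unfolding cgen_def by auto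
  show "emeasure N1 (space M) \<noteq> \<infinity>" for i :: nat
    using prob_space.emeasure_le_1[OF N1(1), of "space M"] by (auto simp: top_unique)
qed (use eq in auto)

lemma kcomp_facts:
  assumes e1: "markov_kernel M e1" and e2: "markov_kernel M e2" and x: "x \<in> space M"
  shows "prob_space (kcomp e1 e2 x)" "sets (kcomp e1 e2 x) = sets M"
    "\<And>A. A \<in> sets M \<Longrightarrow> emeasure (kcomp e1 e2 x) A = (\<integral>\<^sup>+y. emeasure (e1 y) A \<partial>e2 x)"
proof -
  have A: "e2 x \<in> space (prob_algebra M)"
    using measurable_space[OF e2[unfolded markov_kernel_def] x] .
  have B: "e1 \<in> M \<rightarrow>\<^sub>M prob_algebra M" using e1 unfolding markov_kernel_def .
  show "prob_space (kcomp e1 e2 x)" unfolding kcomp_def using prob_space_bind'[OF A B] .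
  show "sets (kcomp e1 e2 x) = sets M" unfolding kcomp_def using sets_bind'[OF A B] .
  show "emeasure (kcomp e1 e2 x) A = (\<integral>\<^sup>+y. emeasure (e1 y) A \<partial>e2 x)" if "A \<in> sets M" for A
    unfolding kcomp_def using emeasure_bind_prob_algebra[OF A B that] .
qed

context prob_space
begin

lemma ind_int[simp]: "A \<in> sets M \<Longrightarrow> integrable M (indicator A :: 'a \<Rightarrow> real)"
  by (rule integrable_const_bound[where B=1]) (auto split: split_indicator)

lemma mk_measure_meas:
  assumes e: "markov_kernel M e" and A: "A \<in> sets M"
  shows "(\<lambda>x. measure (e x) A) \<in> borel_measurable M"
  using measurable_compose[OF e[unfolded markov_kernel_def] measurable_measure_prob_algebra[OF A]] .

lemma mk_emeasure_meas:
  assumes e: "markov_kernel M e" and A: "A \<in> sets M"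
  shows "(\<lambda>x. emeasure (e x) A) \<in> borel_measurable M"
  using measurable_compose[OF mk_sub[OF e] measurable_emeasure_subprob_algebra[OF A]] .

lemma mk_integrable:
  assumes e: "markov_kernel M e" and A: "A \<in> sets M" and C: "C \<in> sets M"
  shows "integrable M (\<lambda>x. indicator C x * measure (e x) A)"
proof (rule integrable_const_bound[where B=1])
  show "AE x in M. norm (indicator C x * measure (e x) A) \<le> 1"
    using mk_facts[OF e] by (intro AE_I2) (auto split: split_indicator intro: prob_space.prob_le_1)
  show "(\<lambda>x. indicator C x * measure (e x) A) \<in> borel_measurable M"
    using mk_measure_meas[OF e A] C by measurable
qed

lemma mk_integrable':
  assumes e: "markov_kernel M e" and A: "A \<in> sets M"
  shows "integrable M (\<lambda>x. measure (e x) A)"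
proof (rule integrable_const_bound[where B=1])
  show "AE x in M. norm (measure (e x) A) \<le> 1"
    using mk_facts[OF e] by (intro AE_I2) (auto intro: prob_space.prob_le_1)
qed (rule mk_measure_meas[OF e A])

lemma int_ind_kernel:
  assumes e: "markov_kernel M e" and A: "A \<in> sets M" and C: "C \<in> sets M"
  shows "(\<integral>\<^sup>+x. indicator C x * emeasure (e x) A \<partial>M) = ennreal (\<integral>x. indicator C x * measure (e x) A \<partial>M)"
proof -
  have "(\<integral>\<^sup>+x. indicator C x * emeasure (e x) A \<partial>M) = (\<integral>\<^sup>+x. ennreal (indicator C x * measure (e x) A) \<partial>M)"
    using mk_facts[OF e]
    by (intro nn_integral_cong) (auto simp: mk_emeq[OF e] split: split_indicator)
  also have "\<dots> = ennreal (\<integral>x. indicator C x * measure (e x) A \<partial>M)"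
    by (intro nn_integral_eq_integral mk_integrable[OF e A C]) auto
  finally show ?thesis .
qed

lemma kcomp_ae_eq:
  assumes e1: "markov_kernel M e1" and e2: "markov_kernel M e2" and e3: "markov_kernel M e3"
    and G: "cgen M G"
    and H: "\<And>A. A \<in> G \<Longrightarrow> AE x in M. (\<integral>y. measure (e1 y) A \<partial>e2 x) = measure (e3 x) A"
  shows "kernel_ae_eq M (kcomp e1 e2) e3"
  unfolding kernel_ae_eq_def
proof -
  have GM: "G \<subseteq> sets M" using G unfolding cgen_def by auto
  have "AE x in M. \<forall>A\<in>G. (\<integral>y. measure (e1 y) A \<partial>e2 x) = measure (e3 x) A"
    using G H unfolding cgen_def by (intro AE_ball_countable') auto
  then show "AE x in M. kcomp e1 e2 x = e3 x"
  proof (rule AE_mp[OF _ AE_I2], intro impI)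
    fix x assume x: "x \<in> space M" and h: "\<forall>A\<in>G. (\<integral>y. measure (e1 y) A \<partial>e2 x) = measure (e3 x) A"
    show "kcomp e1 e2 x = e3 x"
    proof (rule meas_eq_gen[OF G kcomp_facts(1,2)[OF e1 e2 x] mk_facts(1,2)[OF e3 x]])
      fix A assume A: "A \<in> G"
      then have AM: "A \<in> sets M" using GM by auto
      have fe: "(\<lambda>y. measure (e1 y) A) \<in> borel_measurable (e2 x)"
        using mk_measure_meas[OF e1 AM] mk_facts[OF e2 x] by (simp cong: measurable_cong_sets)
      have "emeasure (kcomp e1 e2 x) A = (\<integral>\<^sup>+y. emeasure (e1 y) A \<partial>e2 x)"
        using kcomp_facts(3)[OF e1 e2 x AM] .
      also have "\<dots> = (\<integral>\<^sup>+y. ennreal (measure (e1 y) A) \<partial>e2 x)"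
        using mk_facts[OF e2 x] by (intro nn_integral_cong) (simp add: mk_emeq[OF e1])
      also have "\<dots> = ennreal (\<integral>y. measure (e1 y) A \<partial>e2 x)"
        using mk_facts[OF e2 x] mk_facts[OF e1]
        by (intro int01(4)[OF mk_facts(1)[OF e2 x] fe]) (auto intro: prob_space.prob_le_1)
      also have "\<dots> = emeasure (e3 x) A" using h A mk_emeq[OF e3 x] by simp
      finally show "emeasure (kcomp e1 e2 x) A = emeasure (e3 x) A" .
    qed
  qed
qed

lemma ae_kernel_eq:
  assumes e1: "markov_kernel M e1" and e2: "markov_kernel M e2" and G: "cgen M G"
    and H: "\<And>A. A \<in> G \<Longrightarrow> AE x in M. measure (e1 x) A = measure (e2 x) A"
  shows "kernel_ae_eq M e1 e2"
  unfolding kernel_ae_eq_def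
proof -
  have GM: "G \<subseteq> sets M" using G unfolding cgen_def by auto
  have "AE x in M. \<forall>A\<in>G. measure (e1 x) A = measure (e2 x) A"
    using G H unfolding cgen_def by (intro AE_ball_countable') auto
  then show "AE x in M. e1 x = e2 x"
  proof (rule AE_mp[OF _ AE_I2], intro impI)
    fix x assume x: "x \<in> space M" and h: "\<forall>A\<in>G. measure (e1 x) A = measure (e2 x) A"
    show "e1 x = e2 x"
      by (rule meas_eq_gen[OF G mk_facts(1,2)[OF e1 x] mk_facts(1,2)[OF e2 x]])
         (use h mk_emeq[OF e1 x] mk_emeq[OF e2 x] in auto)
  qed
qed

end

locale pcs = prob_space M for M :: "'a measure" +
  fixes B :: "'a set set"
  assumes pcB: "p_complete_subalgebra M B"
begin

abbreviation "Fm \<equiv> sigma (space M) B"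

lemma B_sa: "sigma_algebra (space M) B"
  using pcB unfolding p_complete_subalgebra_def by auto

lemma B_sub: "B \<subseteq> sets M"
  using pcB unfolding p_complete_subalgebra_def by auto

lemma sets_Fm[simp]: "sets Fm = B"
  using sigma_algebra.sets_measure_of_eq[OF B_sa] by simp

lemma space_Fm[simp]: "space Fm = space M"
  by (simp add: space_measure_of_conv)

lemma subalg: "subalgebra M Fm"
  unfolding subalgebra_def using B_sub by simp

sublocale fs: finite_measure_subalgebra M Fm
  by unfold_locales (rule subalg)

lemma null_in_B: "A \<in> sets M \<Longrightarrow> emeasure M A = 0 \<Longrightarrow> A \<in> B"
  using pcB unfolding p_complete_subalgebra_def by (auto simp: measure_def)

lemma nullset_in_B: "N \<in> null_sets M \<Longrightarrow> N \<in> B"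
  using null_in_B by auto

lemma compl_set:
  assumes A: "A \<in> sets M" and C: "C \<in> B" and ae: "AE x in M. (x \<in> A \<longleftrightarrow> x \<in> C)"
  shows "A \<in> B"
proof -
  obtain N where N: "N \<in> null_sets M" "{x\<in>space M. \<not> (x \<in> A \<longleftrightarrow> x \<in> C)} \<subseteq> N"
    using ae by (auto elim!: AE_E)
  have CM: "C \<subseteq> space M" using C B_sub sets.sets_into_space by blast
  have AM: "A \<subseteq> space M" using A sets.sets_into_space by blast
  have eq: "A = (C - N) \<union> (A \<inter> N)" using N CM AM by blast
  interpret Bs: sigma_algebra "space M" B by (rule B_sa)
  have "C - N \<in> B" using C nullset_in_B[OF N(1)] by blast
  moreover have "A \<inter> N \<in> B"
    using N(1) A by (intro nullset_in_B) (metis Int_commute null_set_Int1)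
  ultimately show ?thesis using eq by (metis Bs.Un)
qed

lemma compl_fun:
  assumes f: "f \<in> M \<rightarrow>\<^sub>M N'" and g: "g \<in> Fm \<rightarrow>\<^sub>M N'" and ae: "AE x in M. f x = g x"
  shows "f \<in> Fm \<rightarrow>\<^sub>M N'"
proof (rule measurableI)
  fix x assume "x \<in> space Fm" then show "f x \<in> space N'" using f by (auto dest: measurable_space)
next
  fix S assume S: "S \<in> sets N'"
  have 1: "f -` S \<inter> space M \<in> sets M" using f S by (rule measurable_sets)
  have 2: "g -` S \<inter> space M \<in> B" using measurable_sets[OF g S] by simp
  have "AE x in M. (x \<in> f -` S \<inter> space M \<longleftrightarrow> x \<in> g -` S \<inter> space M)"
    using ae by eventually_elim auto
  from compl_set[OF 1 2 this] show "f -` S \<inter> space Fm \<in> sets Fm" by simp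
qed

lemma char:
  "is_rcp M B e \<longleftrightarrow> e \<in> Fm \<rightarrow>\<^sub>M prob_algebra M \<and>
     (\<forall>C\<in>B. bind (density M (indicator C)) e = density M (indicator C))"
proof
  assume R: "is_rcp M B e"
  then have e: "markov_kernel M e" and ae: "\<And>A. A \<in> sets M \<Longrightarrow>
     AE x in M. measure (e x) A = real_cond_exp M Fm (indicator A) x"
    unfolding is_rcp_def by auto
  have eF: "e \<in> Fm \<rightarrow>\<^sub>M prob_algebra M"
  proof (rule measurable_prob_algebra_generated[where \<Omega>="space M" and G="sets M"])
    show "sets M = sigma_sets (space M) (sets M)" by (simp add: sets.sigma_sets_eq)
    show "Int_stable (sets M)" by (auto simp: Int_stable_def)
    show "sets M \<subseteq> Pow (space M)" using sets.space_closed by auto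
    show "prob_space (e a)" "sets (e a) = sets M" if "a \<in> space Fm" for a
      using mk_facts[OF e, of a] that by auto
    fix A assume A: "A \<in> sets M"
    show "(\<lambda>a. emeasure (e a) A) \<in> borel_measurable Fm"
    proof (rule compl_fun[OF mk_emeasure_meas[OF e A]])
      show "(\<lambda>x. ennreal (real_cond_exp M Fm (indicator A) x)) \<in> borel_measurable Fm"
        by measurable
      show "AE x in M. emeasure (e x) A = ennreal (real_cond_exp M Fm (indicator A) x)"
        by (rule AE_mp[OF ae[OF A]]) (intro AE_I2, simp add: mk_emeq[OF e])
    qed
  qed
  moreover have "bind (density M (indicator C)) e = density M (indicator C)" if C: "C \<in> B" for C
  proof -
    have CM: "C \<in> sets M" using C B_sub by auto
    show ?thesis
    proof (subst dens_iff[OF e CM not_empty], intro ballI)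
      fix A assume A: "A \<in> sets M"
      have "(\<integral>x. indicator C x * measure (e x) A \<partial>M) = (\<integral>x. indicator C x * real_cond_exp M Fm (indicator A) x \<partial>M)"
        using ae[OF A] mk_measure_meas[OF e A] CM by (intro integral_cong_AE) (auto, measurable)
      also have "\<dots> = (\<integral>x\<in>C. real_cond_exp M Fm (indicator A) x \<partial>M)"
        by (simp add: set_lebesgue_integral_def)
      also have "\<dots> = (\<integral>x\<in>C. indicator A x \<partial>M)"
        using C A by (intro fs.real_cond_exp_intA[symmetric]) auto
      also have "\<dots> = measure M (A \<inter> C)"
        using A CM by (simp add: set_lebesgue_integral_def indicator_inter_arith[symmetric] Int_commute)
      finally show "(\<integral>\<^sup>+x. indicator C x * emeasure (e x) A \<partial>M) = emeasure M (A \<inter> C)"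
        using int_ind_kernel[OF e A CM] A CM by (simp add: emeasure_eq_measure)
    qed
  qed
  ultimately show "e \<in> Fm \<rightarrow>\<^sub>M prob_algebra M \<and>
     (\<forall>C\<in>B. bind (density M (indicator C)) e = density M (indicator C))" by auto
next
  assume H: "e \<in> Fm \<rightarrow>\<^sub>M prob_algebra M \<and>
     (\<forall>C\<in>B. bind (density M (indicator C)) e = density M (indicator C))"
  have e: "markov_kernel M e" unfolding markov_kernel_def
    using H measurable_from_subalg[OF subalg] by blast
  show "is_rcp M B e" unfolding is_rcp_def
  proof (intro conjI e ballI)
    fix A assume A: "A \<in> sets M"
    have "AE x in M. real_cond_exp M Fm (indicator A) x = measure (e x) A"
    proof (rule fs.real_cond_exp_charact)
      fix C assume "C \<in> sets Fm"
      then have C: "C \<in> B" and CM: "C \<in> sets M" using B_sub by auto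
      have eq: "(\<integral>\<^sup>+x. indicator C x * emeasure (e x) A \<partial>M) = emeasure M (A \<inter> C)"
        using H C dens_iff[OF e CM not_empty] A by auto
      have "ennreal (\<integral>x. indicator C x * measure (e x) A \<partial>M) = ennreal (measure M (A \<inter> C))"
        using eq int_ind_kernel[OF e A CM] A CM by (simp add: emeasure_eq_measure)
      then have "(\<integral>x. indicator C x * measure (e x) A \<partial>M) = measure M (A \<inter> C)"
        by (subst (asm) ennreal_inj) (auto intro!: integral_nonneg_AE mk_facts[OF e] split: split_indicator)
      then show "(\<integral>x\<in>C. indicator A x \<partial>M) = (\<integral>x\<in>C. measure (e x) A \<partial>M)"
        using A CM by (simp add: set_lebesgue_integral_def indicator_inter_arith[symmetric] Int_commute)
    next
      show "integrable M (indicator A :: 'a \<Rightarrow> real)" using A by simp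
      show "integrable M (\<lambda>x. measure (e x) A)"
        by (rule mk_integrable'[OF e A])
      show "(\<lambda>x. measure (e x) A) \<in> borel_measurable Fm"
        using measurable_compose[OF conjunct1[OF H] measurable_measure_prob_algebra[OF A]] .
    qed
    then show "AE x in M. measure (e x) A = real_cond_exp M Fm (indicator A) x"
      by (auto elim: AE_mp)
  qed
qed

lemma rcp_int:
  assumes R: "is_rcp M B e" and f: "f \<in> borel_measurable M"
    and b: "\<And>x. x \<in> space M \<Longrightarrow> 0 \<le> f x \<and> f x \<le> 1"
  shows "AE x in M. (\<integral>y. f y \<partial>e x) = real_cond_exp M Fm f x"
proof -
  have eF: "e \<in> Fm \<rightarrow>\<^sub>M prob_algebra M" and dens: "\<And>C. C \<in> B \<Longrightarrow> bind (density M (indicator C)) e = density M (indicator C)"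
    using R char by auto
  have e: "markov_kernel M e" using R unfolding is_rcp_def by auto
  have fe: "\<And>x. x \<in> space M \<Longrightarrow> f \<in> borel_measurable (e x)"
    using f mk_facts[OF e] by (simp cong: measurable_cong_sets)
  have be: "\<And>x y. x \<in> space M \<Longrightarrow> y \<in> space (e x) \<Longrightarrow> 0 \<le> f y \<and> f y \<le> 1"
    using b mk_facts[OF e] by auto
  note I = int01[OF mk_facts(1)[OF e] fe be]
  have gF: "(\<lambda>x. \<integral>y. f y \<partial>e x) \<in> borel_measurable Fm"
    using measurable_compose[OF measurable_prob_algebraD[OF eF] integral_measurable_subprob_algebra[OF f]] .
  have gM: "(\<lambda>x. \<integral>y. f y \<partial>e x) \<in> borel_measurable M"
    using measurable_compose[OF mk_sub[OF e] integral_measurable_subprob_algebra[OF f]] .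
  have "AE x in M. real_cond_exp M Fm f x = (\<integral>y. f y \<partial>e x)"
  proof (rule fs.real_cond_exp_charact)
    show "integrable M f" using int01[OF prob_space_axioms f b] by simp
    show "integrable M (\<lambda>x. \<integral>y. f y \<partial>e x)"
      using I gM by (intro int01(1)[OF prob_space_axioms]) auto
    show "(\<lambda>x. \<integral>y. f y \<partial>e x) \<in> borel_measurable Fm" by (rule gF)
    fix C assume "C \<in> sets Fm"
    then have C: "C \<in> B" and CM: "C \<in> sets M" using B_sub by auto
    have 1: "ennreal (\<integral>x. indicator C x * (\<integral>y. f y \<partial>e x) \<partial>M) = (\<integral>\<^sup>+x. indicator C x * (\<integral>\<^sup>+y. ennreal (f y) \<partial>e x) \<partial>M)"
    proof -
      have "ennreal (\<integral>x. indicator C x * (\<integral>y. f y \<partial>e x) \<partial>M) = (\<integral>\<^sup>+x. ennreal (indicator C x * (\<integral>y. f y \<partial>e x)) \<partial>M)"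
        using I gM CM by (intro int01(4)[OF prob_space_axioms, symmetric]) (auto split: split_indicator)
      also have "\<dots> = (\<integral>\<^sup>+x. indicator C x * (\<integral>\<^sup>+y. ennreal (f y) \<partial>e x) \<partial>M)"
        using I by (intro nn_integral_cong) (auto split: split_indicator)
      finally show ?thesis .
    qed
    also have "\<dots> = (\<integral>\<^sup>+x. (\<integral>\<^sup>+y. ennreal (f y) \<partial>e x) \<partial>density M (indicator C))"
      using CM f mk_sub[OF e] by (subst nn_integral_density) auto
    also have "\<dots> = (\<integral>\<^sup>+y. ennreal (f y) \<partial>bind (density M (indicator C)) e)"
      using f mk_sub[OF e] by (subst nn_integral_bind[where B=M]) (auto cong: measurable_cong_sets)
    also have "\<dots> = (\<integral>\<^sup>+y. ennreal (f y) \<partial>density M (indicator C))" using dens[OF C] by simp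
    also have "\<dots> = (\<integral>\<^sup>+y. indicator C y * ennreal (f y) \<partial>M)"
      using CM f by (subst nn_integral_density) auto
    also have "\<dots> = (\<integral>\<^sup>+y. ennreal (indicator C y * f y) \<partial>M)"
      by (intro nn_integral_cong) (auto split: split_indicator)
    also have "\<dots> = ennreal (\<integral>y. indicator C y * f y \<partial>M)"
      using CM f b by (intro int01(4)[OF prob_space_axioms]) (auto split: split_indicator)
    finally have "(\<integral>x. indicator C x * (\<integral>y. f y \<partial>e x) \<partial>M) = (\<integral>y. indicator C y * f y \<partial>M)"
      using I b by (subst (asm) ennreal_inj) (auto intro!: integral_nonneg_AE split: split_indicator)
    then show "(\<integral>x\<in>C. f x \<partial>M) = (\<integral>x\<in>C. (\<integral>y. f y \<partial>e x) \<partial>M)"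
      by (simp add: set_lebesgue_integral_def)
  qed
  then show ?thesis by (auto elim: AE_mp)
qed

lemma rcp_unique:
  assumes "is_rcp M B e" "is_rcp M B e'" "cgen M G"
  shows "kernel_ae_eq M e e'"
proof (rule ae_kernel_eq[OF _ _ assms(3)])
  show "markov_kernel M e" "markov_kernel M e'" using assms unfolding is_rcp_def by auto
  fix A assume "A \<in> G"
  then have A: "A \<in> sets M" using assms(3) unfolding cgen_def by auto
  have "AE x in M. measure (e x) A = real_cond_exp M Fm (indicator A) x"
       "AE x in M. measure (e' x) A = real_cond_exp M Fm (indicator A) x"
    using assms(1,2) A unfolding is_rcp_def by auto
  then show "AE x in M. measure (e x) A = measure (e' x) A" by eventually_elim simp
qed

lemma rcp_ind_B:
  assumes R: "is_rcp M B e" and C: "C \<in> B"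
  shows "AE x in M. measure (e x) C = indicator C x"
proof -
  have CM: "C \<in> sets M" using C B_sub by auto
  have "AE x in M. measure (e x) C = real_cond_exp M Fm (indicator C) x"
    using R CM unfolding is_rcp_def by auto
  moreover have "AE x in M. real_cond_exp M Fm (indicator C) x = indicator C x"
  proof (rule fs.real_cond_exp_F_meas)
    show "indicator C \<in> borel_measurable Fm" by (rule borel_measurable_indicator) (simp add: C)
  qed (simp add: CM)
  ultimately show ?thesis by eventually_elim simp
qed

lemma rcp_inv_sets:
  assumes R: "is_rcp M B e"
  shows "inv_sets M e = B"
proof
  show "B \<subseteq> inv_sets M e"
    using rcp_ind_B[OF R] B_sub unfolding inv_sets_def by auto
  show "inv_sets M e \<subseteq> B"
  proof
    fix A assume "A \<in> inv_sets M e"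
    then have A: "A \<in> sets M" and ae: "AE x in M. measure (e x) A = indicator A x"
      unfolding inv_sets_def by auto
    have eF: "e \<in> Fm \<rightarrow>\<^sub>M prob_algebra M" using R char by auto
    have gF: "(\<lambda>x. measure (e x) A) \<in> borel_measurable Fm"
      using measurable_compose[OF eF measurable_measure_prob_algebra[OF A]] .
    have S: "{x \<in> space M. 1/2 < measure (e x) A} \<in> B"
      using borel_measurable_iff_greater[of "\<lambda>x. measure (e x) A" Fm] gF unfolding sets_Fm space_Fm by blast
    show "A \<in> B"
      by (rule compl_set[OF A S], rule AE_mp[OF ae AE_I2]) (auto split: split_indicator)
  qed
qed

lemma rcp_mp:
  assumes R: "is_rcp M B e" and G: "cgen M G"
  shows "mp_idempotent M e"
proof -
  have e: "markov_kernel M e" using R unfolding is_rcp_def by auto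
  have eF: "e \<in> Fm \<rightarrow>\<^sub>M prob_algebra M" and dens: "\<And>C. C \<in> B \<Longrightarrow> bind (density M (indicator C)) e = density M (indicator C)"
    using R char by auto
  have top: "space M \<in> B" by (metis sets.top sets_Fm space_Fm)
  have mp: "bind M e = M"
  proof (rule measure_eqI)
    show "sets (bind M e) = sets M" using sets_bind[of M e M] mk_facts[OF e] not_empty by auto
    fix A assume "A \<in> sets (bind M e)"
    then have A: "A \<in> sets M" using sets_bind[of M e M] mk_facts[OF e] not_empty by auto
    have "emeasure (bind M e) A = (\<integral>\<^sup>+x. emeasure (e x) A \<partial>M)"
      using A mk_sub[OF e] not_empty by (intro emeasure_bind) auto
    also have "\<dots> = (\<integral>\<^sup>+x. indicator (space M) x * emeasure (e x) A \<partial>M)"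
      by (intro nn_integral_cong) auto
    also have "\<dots> = emeasure M (A \<inter> space M)"
      using dens[OF top] dens_iff[OF e sets.top not_empty] A by auto
    finally show "emeasure (bind M e) A = emeasure M A"
      using A sets.sets_into_space by (simp add: Int_absorb2)
  qed
  have idem: "kernel_ae_eq M (kcomp e e) e"
  proof (rule kcomp_ae_eq[OF e e e G])
    fix A assume "A \<in> G"
    then have A: "A \<in> sets M" using G unfolding cgen_def by auto
    have gF: "(\<lambda>x. measure (e x) A) \<in> borel_measurable Fm"
      using measurable_compose[OF eF measurable_measure_prob_algebra[OF A]] .
    have "AE x in M. (\<integral>y. measure (e y) A \<partial>e x) = real_cond_exp M Fm (\<lambda>y. measure (e y) A) x"
      using mk_facts[OF e] by (intro rcp_int[OF R mk_measure_meas[OF e A]]) (auto intro: prob_space.prob_le_1)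
    moreover have "AE x in M. real_cond_exp M Fm (\<lambda>y. measure (e y) A) x = measure (e x) A"
      by (intro fs.real_cond_exp_F_meas gF mk_integrable'[OF e A])
    ultimately show "AE x in M. (\<integral>y. measure (e y) A \<partial>e x) = measure (e x) A"
      by eventually_elim simp
  qed
  show ?thesis unfolding mp_idempotent_def measure_preserving_kernel_def ae_idempotent_def
    using e mp idem by auto
qed

end



lemma prob_set_const:
  assumes N: "prob_space N" and S: "S \<in> sets N" and ae: "AE y in N. (y \<in> S \<longleftrightarrow> c)"
  shows "measure N S = (if c then 1 else 0)"
proof (cases c)
  case True
  then have "AE y in N. y \<in> S" using ae by simp
  then show ?thesis using prob_space.AE_in_set_eq_1[OF N S] True by simp
next
  case False
  then have "AE y in N. y \<notin> S" using ae by simp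
  then have "emeasure N S = 0"
    using AE_iff_measurable[OF S, of "\<lambda>y. y \<notin> S"] S sets.sets_into_space by auto
  then show ?thesis using False by (simp add: measure_def)
qed

context prob_space
begin

lemma mp_emeasure:
  assumes e: "markov_kernel M e" and mp: "bind M e = M" and A: "A \<in> sets M"
  shows "(\<integral>\<^sup>+x. emeasure (e x) A \<partial>M) = emeasure M A"
proof -
  have "emeasure (bind M e) A = (\<integral>\<^sup>+x. emeasure (e x) A \<partial>M)"
    using A mk_sub[OF e] not_empty by (intro emeasure_bind) auto
  then show ?thesis using mp by simp
qed

lemma mp_pcomplete:
  assumes e: "markov_kernel M e" and mp: "bind M e = M"
  shows "p_complete_subalgebra M (inv_sets M e)"
  unfolding p_complete_subalgebra_def
proof (intro conjI ballI impI)
  have sub: "inv_sets M e \<subseteq> sets M" unfolding inv_sets_def by auto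
  then show "inv_sets M e \<subseteq> sets M" .
  fix A assume A: "A \<in> sets M" and "measure M A = 0"
  then have A0: "emeasure M A = 0" by (simp add: emeasure_eq_measure)
  have "AE x in M. emeasure (e x) A = 0"
    using mp_emeasure[OF e mp A] A0 nn_integral_0_iff_AE[OF mk_emeasure_meas[OF e A]] by simp
  moreover have "AE x in M. x \<notin> A" using A A0 by (intro AE_not_in) auto
  ultimately have "AE x in M. measure (e x) A = indicator A x"
    by eventually_elim (simp add: measure_def)
  then show "A \<in> inv_sets M e" using A unfolding inv_sets_def by auto
next
  show "sigma_algebra (space M) (inv_sets M e)"
    unfolding sigma_algebra_iff2
  proof (intro conjI ballI allI impI)
    show "inv_sets M e \<subseteq> Pow (space M)" unfolding inv_sets_def using sets.sets_into_space by auto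
    show "{} \<in> inv_sets M e" unfolding inv_sets_def by auto
  next
    fix s assume "s \<in> inv_sets M e"
    then have s: "s \<in> sets M" and ae: "AE x in M. measure (e x) s = indicator s x"
      unfolding inv_sets_def by auto
    have "AE x in M. measure (e x) (space M - s) = indicator (space M - s) x"
    proof (rule AE_mp[OF ae AE_I2], intro impI)
      fix x assume x: "x \<in> space M" and h: "measure (e x) s = indicator s x"
      have "measure (e x) (space M - s) = 1 - measure (e x) s"
        using prob_space.prob_compl[OF mk_facts(1)[OF e x], of s] mk_facts(2,3)[OF e x] s by simp
      then show "measure (e x) (space M - s) = indicator (space M - s) x"
        using h x by (simp split: split_indicator)
    qed
    then show "space M - s \<in> inv_sets M e" using s unfolding inv_sets_def by auto
  next
    fix A :: "nat \<Rightarrow> 'a set" assume "range A \<subseteq> inv_sets M e"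
    then have As: "\<And>i. A i \<in> sets M" and ae: "\<And>i. AE x in M. measure (e x) (A i) = indicator (A i) x"
      unfolding inv_sets_def by auto
    have U: "(\<Union>i. A i) \<in> sets M" using As by auto
    have "AE x in M. \<forall>i. measure (e x) (A i) = indicator (A i) x"
      using ae by (simp add: AE_all_countable)
    then have "AE x in M. measure (e x) (\<Union>i. A i) = indicator (\<Union>i. A i) x"
    proof (rule AE_mp[OF _ AE_I2], intro impI)
      fix x assume x: "x \<in> space M" and h: "\<forall>i. measure (e x) (A i) = indicator (A i) x"
      interpret ex: prob_space "e x" using mk_facts[OF e x] by simp
      have sx: "sets (e x) = sets M" using mk_facts[OF e x] by simp
      show "measure (e x) (\<Union>i. A i) = indicator (\<Union>i. A i) x"
      proof (cases "\<exists>i. x \<in> A i")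
        case True
        then obtain i where i: "x \<in> A i" by auto
        have "measure (e x) (A i) \<le> measure (e x) (\<Union>i. A i)"
          using As U sx by (intro ex.finite_measure_mono) auto
        moreover have "measure (e x) (\<Union>i. A i) \<le> 1" by (rule ex.prob_le_1)
        moreover have "measure (e x) (A i) = 1" using h i by simp
        ultimately have "measure (e x) (\<Union>i. A i) = 1" by linarith
        then show ?thesis using i by (auto simp: indicator_def)
      next
        case False
        have "emeasure (e x) (\<Union>i. A i) = 0"
        proof (rule emeasure_UN_eq_0)
          show "emeasure (e x) (A i) = 0" for i
            using h False ex.emeasure_eq_measure by (auto simp: indicator_def)
          show "range A \<subseteq> sets (e x)" using As sx by auto
        qed
        then show ?thesis using False by (simp add: measure_def indicator_def)
      qed
    qed
    then show "(\<Union>i. A i) \<in> inv_sets M e" using U unfolding inv_sets_def by auto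
  qed
qed

lemma inv_sets_cong:
  assumes "kernel_ae_eq M e e'"
  shows "inv_sets M e = inv_sets M e'"
proof -
  have ae: "AE x in M. e x = e' x" using assms unfolding kernel_ae_eq_def .
  have "(AE x in M. measure (e x) A = indicator A x) \<longleftrightarrow> (AE x in M. measure (e' x) A = indicator A x)" for A
  proof
    assume "AE x in M. measure (e x) A = indicator A x"
    with ae show "AE x in M. measure (e' x) A = indicator A x" by eventually_elim simp
  next
    assume "AE x in M. measure (e' x) A = indicator A x"
    with ae show "AE x in M. measure (e x) A = indicator A x" by eventually_elim simp
  qed
  then show ?thesis unfolding inv_sets_def by auto
qed

lemma var_const:
  assumes e: "markov_kernel M e" and mp: "bind M e = M" and idem: "kernel_ae_eq M (kcomp e e) e"
    and A: "A \<in> sets M"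
  shows "AE x in M. AE y in e x. measure (e y) A = measure (e x) A"
proof -
  define g where "g y = measure (e y) A" for y
  have gM[measurable]: "g \<in> borel_measurable M" unfolding g_def by (rule mk_measure_meas[OF e A])
  have g01: "\<And>y. y \<in> space M \<Longrightarrow> 0 \<le> g y \<and> g y \<le> 1"
    unfolding g_def using mk_facts[OF e] by (auto intro: prob_space.prob_le_1)
  have ge: "\<And>x. x \<in> space M \<Longrightarrow> g \<in> borel_measurable (e x)"
    using gM mk_facts[OF e] by (simp cong: measurable_cong_sets)
  have g2e: "\<And>x. x \<in> space M \<Longrightarrow> (\<lambda>y. (g y)\<^sup>2) \<in> borel_measurable (e x)"
    using ge by measurable
  have g01e: "\<And>x y. x \<in> space M \<Longrightarrow> y \<in> space (e x) \<Longrightarrow> 0 \<le> g y \<and> g y \<le> 1"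
    using g01 mk_facts[OF e] by auto
  have g201e: "\<And>x y. x \<in> space M \<Longrightarrow> y \<in> space (e x) \<Longrightarrow> 0 \<le> (g y)\<^sup>2 \<and> (g y)\<^sup>2 \<le> 1"
    using g01e by (simp add: power_le_one)
  have Ig: "integrable (e x) g" "0 \<le> (\<integral>y. g y \<partial>e x)" "(\<integral>y. g y \<partial>e x) \<le> 1"
      "(\<integral>\<^sup>+y. ennreal (g y) \<partial>e x) = ennreal (\<integral>y. g y \<partial>e x)" if x: "x \<in> space M" for x
    using int01[OF mk_facts(1)[OF e x] ge[OF x] g01e[OF x]] by auto
  have Ig2: "integrable (e x) (\<lambda>y. (g y)\<^sup>2)" "0 \<le> (\<integral>y. (g y)\<^sup>2 \<partial>e x)" "(\<integral>y. (g y)\<^sup>2 \<partial>e x) \<le> 1"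
      "(\<integral>\<^sup>+y. ennreal ((g y)\<^sup>2) \<partial>e x) = ennreal (\<integral>y. (g y)\<^sup>2 \<partial>e x)" if x: "x \<in> space M" for x
    using int01[OF mk_facts(1)[OF e x] g2e[OF x] g201e[OF x]] by auto
  have i: "AE x in M. (\<integral>y. g y \<partial>e x) = g x"
    using idem unfolding kernel_ae_eq_def
  proof (rule AE_mp[OF _ AE_I2], intro impI)
    fix x assume x: "x \<in> space M" and eq: "kcomp e e x = e x"
    have "ennreal (\<integral>y. g y \<partial>e x) = (\<integral>\<^sup>+y. ennreal (g y) \<partial>e x)" using Ig(4)[OF x] by simp
    also have "\<dots> = (\<integral>\<^sup>+y. emeasure (e y) A \<partial>e x)"
      using mk_facts[OF e x] by (intro nn_integral_cong) (simp add: g_def mk_emeq[OF e])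
    also have "\<dots> = emeasure (kcomp e e x) A" using kcomp_facts(3)[OF e e x A] by simp
    also have "\<dots> = ennreal (g x)" using eq mk_emeq[OF e x] by (simp add: g_def)
    finally show "(\<integral>y. g y \<partial>e x) = g x" using Ig(2)[OF x] g01[OF x] by simp
  qed
  define h where "h x = (\<integral>y. (g y)\<^sup>2 \<partial>e x)" for x
  have hM[measurable]: "h \<in> borel_measurable M" unfolding h_def
    using measurable_compose[OF mk_sub[OF e] integral_measurable_subprob_algebra[of "\<lambda>y. (g y)\<^sup>2" M]] by simp
  have h01: "\<And>x. x \<in> space M \<Longrightarrow> 0 \<le> h x \<and> h x \<le> 1" unfolding h_def using Ig2 by auto
  have int_h: "(\<integral>x. h x \<partial>M) = (\<integral>x. (g x)\<^sup>2 \<partial>M)"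
  proof -
    have "ennreal (\<integral>x. h x \<partial>M) = (\<integral>\<^sup>+x. ennreal (h x) \<partial>M)"
      using int01(4)[OF prob_space_axioms hM h01] by simp
    also have "\<dots> = (\<integral>\<^sup>+x. (\<integral>\<^sup>+y. ennreal ((g y)\<^sup>2) \<partial>e x) \<partial>M)"
      unfolding h_def using Ig2 by (intro nn_integral_cong) simp
    also have "\<dots> = (\<integral>\<^sup>+y. ennreal ((g y)\<^sup>2) \<partial>bind M e)"
      using mk_sub[OF e] by (subst nn_integral_bind[where B=M]) auto
    also have "\<dots> = (\<integral>\<^sup>+y. ennreal ((g y)\<^sup>2) \<partial>M)" using mp by simp
    also have "\<dots> = ennreal (\<integral>x. (g x)\<^sup>2 \<partial>M)"
      using g01 by (intro int01(4)[OF prob_space_axioms]) (auto simp: power_le_one)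
    finally show ?thesis using h01 by (subst (asm) ennreal_inj) (auto intro!: integral_nonneg_AE)
  qed
  define V where "V x = h x - (g x)\<^sup>2" for x
  have VM[measurable]: "V \<in> borel_measurable M" unfolding V_def by measurable
  have Vvar: "AE x in M. V x = (\<integral>y. (g y - g x)\<^sup>2 \<partial>e x)"
  proof (rule AE_mp[OF i AE_I2], intro impI)
    fix x assume x: "x \<in> space M" and ix: "(\<integral>y. g y \<partial>e x) = g x"
    interpret ex: prob_space "e x" using mk_facts[OF e x] by simp
    have "ex.variance g = (\<integral>y. (g y)\<^sup>2 \<partial>e x) - (\<integral>y. g y \<partial>e x)\<^sup>2"
      using Ig[OF x] Ig2[OF x] by (intro ex.variance_eq) auto
    then show "V x = (\<integral>y. (g y - g x)\<^sup>2 \<partial>e x)" using ix unfolding V_def h_def by simp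
  qed
  have V0: "AE x in M. 0 \<le> V x"
    using Vvar by eventually_elim (auto intro!: integral_nonneg_AE)
  have VI: "integrable M V"
  proof (rule integrable_const_bound[where B=1])
    show "AE x in M. norm (V x) \<le> 1"
    proof (rule AE_mp[OF V0 AE_I2], intro impI)
      fix x assume x: "x \<in> space M" "0 \<le> V x"
      have "(g x)\<^sup>2 \<ge> 0" by simp
      then have "V x \<le> 1" using h01[OF x(1)] unfolding V_def by linarith
      then show "norm (V x) \<le> 1" using x(2) by simp
    qed
  qed (rule VM)
  have "(\<integral>x. V x \<partial>M) = 0"
  proof -
    have "integrable M h" using int01(1)[OF prob_space_axioms hM h01] .
    moreover have "integrable M (\<lambda>x. (g x)\<^sup>2)"
      using g01 by (intro int01(1)[OF prob_space_axioms]) (auto simp: power_le_one)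
    ultimately show ?thesis unfolding V_def using int_h by simp
  qed
  then have "AE x in M. V x = 0" using integral_nonneg_eq_0_iff_AE[OF VI V0] by simp
  then show ?thesis unfolding g_def[symmetric]
  proof (rule AE_mp[OF _ AE_mp[OF Vvar AE_I2]], intro impI)
    fix x assume x: "x \<in> space M" and v: "V x = (\<integral>y. (g y - g x)\<^sup>2 \<partial>e x)" and v0: "V x = 0"
    interpret ex: prob_space "e x" using mk_facts[OF e x] by simp
    have int: "integrable (e x) (\<lambda>y. (g y - g x)\<^sup>2)"
    proof (rule ex.integrable_const_bound[where B=1])
      show "AE y in e x. norm ((g y - g x)\<^sup>2) \<le> 1"
      proof (intro AE_I2)
        fix y assume y: "y \<in> space (e x)"
        have "\<bar>g y - g x\<bar> \<le> 1" using g01e[OF x y] g01[OF x] by auto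
        then show "norm ((g y - g x)\<^sup>2) \<le> 1" by (simp add: abs_square_le_1)
      qed
    qed (use ge[OF x] in measurable)
    have "AE y in e x. (g y - g x)\<^sup>2 = 0"
      using integral_nonneg_eq_0_iff_AE[OF int] v v0 by auto
    then show "AE y in e x. g y = g x" by eventually_elim simp
  qed
qed

lemma mp_rcp:
  assumes mpi: "mp_idempotent M e"
  shows "is_rcp M (inv_sets M e) e"
proof -
  have e: "markov_kernel M e" and mp: "bind M e = M" and idem: "kernel_ae_eq M (kcomp e e) e"
    using mpi unfolding mp_idempotent_def measure_preserving_kernel_def ae_idempotent_def by auto
  interpret I: pcs M "inv_sets M e" using mp_pcomplete[OF e mp] by unfold_locales
  show ?thesis
  proof (subst I.char, intro conjI ballI)
    show "e \<in> I.Fm \<rightarrow>\<^sub>M prob_algebra M"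
    proof (rule measurable_prob_algebra_generated[where \<Omega>="space M" and G="sets M"])
      show "sets M = sigma_sets (space M) (sets M)" by (simp add: sets.sigma_sets_eq)
      show "Int_stable (sets M)" by (auto simp: Int_stable_def)
      show "sets M \<subseteq> Pow (space M)" using sets.space_closed by auto
      show "prob_space (e a)" "sets (e a) = sets M" if "a \<in> space I.Fm" for a
        using mk_facts[OF e, of a] that by auto
      fix A assume A: "A \<in> sets M"
      have gF: "(\<lambda>x. measure (e x) A) \<in> borel_measurable I.Fm"
        unfolding borel_measurable_iff_greater I.sets_Fm I.space_Fm
      proof
        fix c
        define S where "S = {x \<in> space M. c < measure (e x) A}"
        have S: "S \<in> sets M" unfolding S_def using mk_measure_meas[OF e A] by measurable
        have "AE x in M. measure (e x) S = indicator S x"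
        proof (rule AE_mp[OF var_const[OF e mp idem A] AE_I2], intro impI)
          fix x assume x: "x \<in> space M" and h: "AE y in e x. measure (e y) A = measure (e x) A"
          have "AE y in e x. (y \<in> S \<longleftrightarrow> c < measure (e x) A)"
          proof (rule AE_mp[OF h AE_I2], intro impI)
            fix y assume "y \<in> space (e x)" "measure (e y) A = measure (e x) A"
            then show "y \<in> S \<longleftrightarrow> c < measure (e x) A" using mk_facts(3)[OF e x] by (auto simp: S_def)
          qed
          then have "measure (e x) S = (if c < measure (e x) A then 1 else 0)"
            using prob_set_const[OF mk_facts(1)[OF e x]] mk_facts(2)[OF e x] S by simp
          then show "measure (e x) S = indicator S x" using x by (simp add: S_def indicator_def)
        qed
        then show "S \<in> inv_sets M e" unfolding inv_sets_def using S by auto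
      qed
      show "(\<lambda>a. emeasure (e a) A) \<in> borel_measurable I.Fm"
        using gF by (subst measurable_cong[where g="\<lambda>a. ennreal (measure (e a) A)"])
          (auto simp: mk_emeq[OF e])
    qed
  next
    fix C assume C: "C \<in> inv_sets M e"
    then have CM: "C \<in> sets M" and aeC: "AE x in M. measure (e x) C = indicator C x"
      unfolding inv_sets_def by auto
    show "bind (density M (indicator C)) e = density M (indicator C)"
    proof (subst dens_iff[OF e CM not_empty], intro ballI)
      fix A assume A: "A \<in> sets M"
      have "AE x in M. indicator C x * emeasure (e x) A = emeasure (e x) (A \<inter> C)"
      proof (rule AE_mp[OF aeC AE_I2], intro impI)
        fix x assume x: "x \<in> space M" and h: "measure (e x) C = indicator C x"
        interpret ex: prob_space "e x" using mk_facts[OF e x] by simp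
        have sx: "sets (e x) = sets M" using mk_facts[OF e x] by simp
        show "indicator C x * emeasure (e x) A = emeasure (e x) (A \<inter> C)"
        proof (cases "x \<in> C")
          case True
          then have "AE y in e x. y \<in> C" using h ex.AE_in_set_eq_1[of C] CM sx by simp
          then have "emeasure (e x) A = emeasure (e x) (A \<inter> C)"
            by (intro emeasure_eq_AE) (auto simp: sx A CM elim: AE_mp)
          then show ?thesis using True by simp
        next
          case False
          then have "emeasure (e x) C = 0" using h ex.emeasure_eq_measure by simp
          then have "emeasure (e x) (A \<inter> C) = 0"
            using emeasure_mono[of "A \<inter> C" C "e x"] CM sx by auto
          then show ?thesis using False by simp
        qed
      qed
      then have "(\<integral>\<^sup>+x. indicator C x * emeasure (e x) A \<partial>M) = (\<integral>\<^sup>+x. emeasure (e x) (A \<inter> C) \<partial>M)"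
        by (rule nn_integral_cong_AE)
      also have "\<dots> = emeasure M (A \<inter> C)" using mp_emeasure[OF e mp] A CM by auto
      finally show "(\<integral>\<^sup>+x. indicator C x * emeasure (e x) A \<partial>M) = emeasure M (A \<inter> C)" .
    qed
  qed
qed

lemma kcomp_measure:
  assumes e1: "markov_kernel M e1" and e2: "markov_kernel M e2" and x: "x \<in> space M" and A: "A \<in> sets M"
  shows "measure (kcomp e1 e2 x) A = (\<integral>y. measure (e1 y) A \<partial>e2 x)"
proof -
  have fe: "(\<lambda>y. measure (e1 y) A) \<in> borel_measurable (e2 x)"
    using mk_measure_meas[OF e1 A] mk_facts[OF e2 x] by (simp cong: measurable_cong_sets)
  note I = int01[OF mk_facts(1)[OF e2 x] fe]
  have b: "\<And>y. y \<in> space (e2 x) \<Longrightarrow> 0 \<le> measure (e1 y) A \<and> measure (e1 y) A \<le> 1"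
    using mk_facts[OF e2 x] mk_facts[OF e1] by (auto intro: prob_space.prob_le_1)
  have "emeasure (kcomp e1 e2 x) A = (\<integral>\<^sup>+y. emeasure (e1 y) A \<partial>e2 x)"
    using kcomp_facts(3)[OF e1 e2 x A] .
  also have "\<dots> = (\<integral>\<^sup>+y. ennreal (measure (e1 y) A) \<partial>e2 x)"
    using mk_facts[OF e2 x] by (intro nn_integral_cong) (simp add: mk_emeq[OF e1])
  also have "\<dots> = ennreal (\<integral>y. measure (e1 y) A \<partial>e2 x)" using I(4)[OF b] by simp
  finally show ?thesis using I(2)[OF b]
    by (simp add: finite_measure.emeasure_eq_measure[OF prob_space.finite_measure[OF kcomp_facts(1)[OF e1 e2 x]]])
qed

lemma subalg_mono:
  assumes "pcs M B1" "pcs M B2" "B1 \<subseteq> B2"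
  shows "subalgebra (sigma (space M) B2) (sigma (space M) B1)"
  using assms pcs.sets_Fm pcs.space_Fm unfolding subalgebra_def by metis

lemma idem_le_iff:
  assumes m1: "mp_idempotent M e1" and m2: "mp_idempotent M e2" and G: "cgen M G"
  shows "idem_le M e1 e2 \<longleftrightarrow> inv_sets M e1 \<subseteq> inv_sets M e2"
proof -
  have e1: "markov_kernel M e1" and mp1: "bind M e1 = M"
    using m1 unfolding mp_idempotent_def measure_preserving_kernel_def by auto
  have e2: "markov_kernel M e2" and mp2: "bind M e2 = M"
    using m2 unfolding mp_idempotent_def measure_preserving_kernel_def by auto
  interpret I1: pcs M "inv_sets M e1" using mp_pcomplete[OF e1 mp1] by unfold_locales
  interpret I2: pcs M "inv_sets M e2" using mp_pcomplete[OF e2 mp2] by unfold_locales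
  have R1: "is_rcp M (inv_sets M e1) e1" by (rule mp_rcp[OF m1])
  have R2: "is_rcp M (inv_sets M e2) e2" by (rule mp_rcp[OF m2])
  have GM: "G \<subseteq> sets M" using G unfolding cgen_def by auto
  have b1: "\<And>A x. x \<in> space M \<Longrightarrow> 0 \<le> measure (e1 x) A \<and> measure (e1 x) A \<le> 1"
    using mk_facts[OF e1] by (auto intro: prob_space.prob_le_1)
  have b2: "\<And>A x. x \<in> space M \<Longrightarrow> 0 \<le> measure (e2 x) A \<and> measure (e2 x) A \<le> 1"
    using mk_facts[OF e2] by (auto intro: prob_space.prob_le_1)
  show ?thesis
  proof
    assume le: "idem_le M e1 e2"
    then have ae: "AE x in M. kcomp e1 e2 x = e1 x" unfolding idem_le_def kernel_ae_eq_def by auto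
    show "inv_sets M e1 \<subseteq> inv_sets M e2"
    proof
      fix C assume C: "C \<in> inv_sets M e1"
      then have CM: "C \<in> sets M" and aeC: "AE x in M. measure (e1 x) C = indicator C x"
        unfolding inv_sets_def by auto
      have a1: "AE x in M. measure (kcomp e1 e2 x) C = indicator C x"
        using ae aeC by eventually_elim simp
      have a2: "AE x in M. (\<integral>y. measure (e1 y) C \<partial>e2 x) = real_cond_exp M I2.Fm (\<lambda>y. measure (e1 y) C) x"
        by (rule I2.rcp_int[OF R2 mk_measure_meas[OF e1 CM] b1])
      have a3: "AE x in M. real_cond_exp M I2.Fm (\<lambda>y. measure (e1 y) C) x = real_cond_exp M I2.Fm (indicator C) x"
        by (rule I2.fs.real_cond_exp_cong[OF aeC mk_measure_meas[OF e1 CM]]) (use CM in simp)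
      have a4: "AE x in M. measure (e2 x) C = real_cond_exp M I2.Fm (indicator C) x"
        using R2 CM unfolding is_rcp_def by auto
      have "AE x in M. measure (e2 x) C = indicator C x"
        using a1 a2 a3 a4 AE_space
        by eventually_elim (simp add: kcomp_measure[OF e1 e2 _ CM])
      then show "C \<in> inv_sets M e2" using CM unfolding inv_sets_def by auto
    qed
  next
    assume sub: "inv_sets M e1 \<subseteq> inv_sets M e2"
    have sa: "subalgebra I2.Fm I1.Fm"
      by (rule subalg_mono[OF I1.pcs_axioms I2.pcs_axioms sub])
    have "kernel_ae_eq M (kcomp e1 e2) e1"
    proof (rule kcomp_ae_eq[OF e1 e2 e1 G])
      fix A assume "A \<in> G"
      then have A: "A \<in> sets M" using GM by auto
      have gF1: "(\<lambda>x. measure (e1 x) A) \<in> borel_measurable I1.Fm"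
        using measurable_compose[OF conjunct1[OF I1.char[THEN iffD1, OF R1]] measurable_measure_prob_algebra[OF A]] .
      have gF2: "(\<lambda>x. measure (e1 x) A) \<in> borel_measurable I2.Fm"
        by (rule measurable_from_subalg[OF sa gF1])
      have "AE x in M. (\<integral>y. measure (e1 y) A \<partial>e2 x) = real_cond_exp M I2.Fm (\<lambda>y. measure (e1 y) A) x"
        by (rule I2.rcp_int[OF R2 mk_measure_meas[OF e1 A] b1])
      moreover have "AE x in M. real_cond_exp M I2.Fm (\<lambda>y. measure (e1 y) A) x = measure (e1 x) A"
        by (rule I2.fs.real_cond_exp_F_meas[OF mk_integrable'[OF e1 A] gF2])
      ultimately show "AE x in M. (\<integral>y. measure (e1 y) A \<partial>e2 x) = measure (e1 x) A"
        by eventually_elim simp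
    qed
    moreover have "kernel_ae_eq M (kcomp e2 e1) e1"
    proof (rule kcomp_ae_eq[OF e2 e1 e1 G])
      fix A assume "A \<in> G"
      then have A: "A \<in> sets M" using GM by auto
      have a1: "AE x in M. (\<integral>y. measure (e2 y) A \<partial>e1 x) = real_cond_exp M I1.Fm (\<lambda>y. measure (e2 y) A) x"
        by (rule I1.rcp_int[OF R1 mk_measure_meas[OF e2 A] b2])
      have r2: "AE x in M. measure (e2 x) A = real_cond_exp M I2.Fm (indicator A) x"
        using R2 A unfolding is_rcp_def by auto
      have a2: "AE x in M. real_cond_exp M I1.Fm (\<lambda>y. measure (e2 y) A) x
          = real_cond_exp M I1.Fm (real_cond_exp M I2.Fm (indicator A)) x"
        by (rule I1.fs.real_cond_exp_cong[OF r2 mk_measure_meas[OF e2 A]]) simp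
      have a3: "AE x in M. real_cond_exp M I1.Fm (real_cond_exp M I2.Fm (indicator A)) x
          = real_cond_exp M I1.Fm (indicator A) x"
        by (rule I1.fs.real_cond_exp_nested_subalg[OF I2.subalg sa]) (use A in simp)
      have a4: "AE x in M. measure (e1 x) A = real_cond_exp M I1.Fm (indicator A) x"
        using R1 A unfolding is_rcp_def by auto
      show "AE x in M. (\<integral>y. measure (e2 y) A \<partial>e1 x) = measure (e1 x) A"
        using a1 a2 a3 a4 by eventually_elim simp
    qed
    ultimately show "idem_le M e1 e2" unfolding idem_le_def by auto
  qed
qed

end



inductive_set gen :: "'a set \<Rightarrow> 'a set set \<Rightarrow> 'a set set" for \<Omega> G where
  gen_basic: "A \<in> G \<Longrightarrow> A \<in> gen \<Omega> G"
| gen_top: "\<Omega> \<in> gen \<Omega> G"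
| gen_compl: "A \<in> gen \<Omega> G \<Longrightarrow> \<Omega> - A \<in> gen \<Omega> G"
| gen_Un: "A \<in> gen \<Omega> G \<Longrightarrow> C \<in> gen \<Omega> G \<Longrightarrow> A \<union> C \<in> gen \<Omega> G"

lemma gen_Pow1: "A \<in> gen \<Omega> G \<Longrightarrow> G \<subseteq> Pow \<Omega> \<Longrightarrow> A \<subseteq> \<Omega>"
  by (induct rule: gen.induct) auto

lemma gen_Pow: "G \<subseteq> Pow \<Omega> \<Longrightarrow> gen \<Omega> G \<subseteq> Pow \<Omega>"
  using gen_Pow1 by blast

lemma gen_algebra: "G \<subseteq> Pow \<Omega> \<Longrightarrow> algebra \<Omega> (gen \<Omega> G)"
  unfolding algebra_iff_Un
proof (intro conjI ballI)
  assume G: "G \<subseteq> Pow \<Omega>"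
  show "gen \<Omega> G \<subseteq> Pow \<Omega>" using gen_Pow[OF G] .
  have "\<Omega> - \<Omega> \<in> gen \<Omega> G" by (intro gen_compl gen_top)
  then show "{} \<in> gen \<Omega> G" by simp
qed (auto intro: gen_compl gen_Un)

lemma gen_subset1: "A \<in> gen \<Omega> G \<Longrightarrow> algebra \<Omega> R \<Longrightarrow> G \<subseteq> R \<Longrightarrow> A \<in> R"
  proof (induct rule: gen.induct)
    case (gen_top) then show ?case by (metis algebra_iff_Un Diff_empty)
  next
    case (gen_compl A) then show ?case by (simp add: algebra_iff_Un)
  next
    case (gen_Un A C) then show ?case by (simp add: algebra_iff_Un)
  qed auto

lemma gen_subset: "algebra \<Omega> R \<Longrightarrow> G \<subseteq> R \<Longrightarrow> gen \<Omega> G \<subseteq> R"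
  using gen_subset1 by blast

lemma gen_mono1: "A \<in> gen \<Omega> G \<Longrightarrow> G \<subseteq> H \<Longrightarrow> A \<in> gen \<Omega> H"
  by (induct rule: gen.induct) (auto intro: gen.intros)

lemma gen_mono: "G \<subseteq> H \<Longrightarrow> gen \<Omega> G \<subseteq> gen \<Omega> H"
  using gen_mono1 by blast

datatype expr = Atom nat | Top | Cmp expr | Join expr expr

instance expr :: countable by countable_datatype

primrec expr_val :: "'a set \<Rightarrow> (nat \<Rightarrow> 'a set) \<Rightarrow> expr \<Rightarrow> 'a set" where
  "expr_val \<Omega> g (Atom n) = g n"
| "expr_val \<Omega> g Top = \<Omega>"
| "expr_val \<Omega> g (Cmp e) = \<Omega> - expr_val \<Omega> g e"
| "expr_val \<Omega> g (Join e1 e2) = expr_val \<Omega> g e1 \<union> expr_val \<Omega> g e2"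

lemma gen_countable:
  assumes G: "countable G"
  shows "countable (gen \<Omega> G)"
proof -
  define G' where "G' = insert \<Omega> G"
  have G': "countable G'" "G' \<noteq> {}" using G unfolding G'_def by auto
  have "gen \<Omega> G' \<subseteq> range (expr_val \<Omega> (from_nat_into G'))"
  proof
    fix A assume "A \<in> gen \<Omega> G'"
    then show "A \<in> range (expr_val \<Omega> (from_nat_into G'))"
    proof (induct rule: gen.induct)
      case (gen_basic A)
      then have "A = expr_val \<Omega> (from_nat_into G') (Atom (to_nat_on G' A))"
        using G' by (simp add: from_nat_into_to_nat_on)
      then show ?case by blast
    next
      case gen_top
      have "\<Omega> = expr_val \<Omega> (from_nat_into G') Top" by simp
      then show ?case by blast
    next
      case (gen_compl A)
      then obtain e where "A = expr_val \<Omega> (from_nat_into G') e" by auto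
      then have "\<Omega> - A = expr_val \<Omega> (from_nat_into G') (Cmp e)" by simp
      then show ?case by blast
    next
      case (gen_Un A C)
      then obtain e1 e2 where "A = expr_val \<Omega> (from_nat_into G') e1" "C = expr_val \<Omega> (from_nat_into G') e2" by auto
      then have "A \<union> C = expr_val \<Omega> (from_nat_into G') (Join e1 e2)" by simp
      then show ?case by blast
    qed
  qed
  moreover have "gen \<Omega> G \<subseteq> gen \<Omega> G'" by (rule gen_mono) (auto simp: G'_def)
  moreover have "countable (range (expr_val \<Omega> (from_nat_into G')))" by (rule countable_image) simp
  ultimately show ?thesis by (meson countable_subset order_trans)
qed

lemma gen_chain:
  assumes inc: "\<And>k. S k \<subseteq> S (Suc k)" and A: "A \<in> gen \<Omega> (\<Union>k. S k)"
  shows "\<exists>k. A \<in> gen \<Omega> (S k)"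
  using A
proof (induct rule: gen.induct)
  case (gen_basic A) then show ?case by (auto intro: gen.intros)
next
  case gen_top then show ?case by (auto intro: gen.intros)
next
  case (gen_compl A) then show ?case by (auto intro: gen.intros)
next
  case (gen_Un A C)
  then obtain k1 k2 where k: "A \<in> gen \<Omega> (S k1)" "C \<in> gen \<Omega> (S k2)" by auto
  have mono: "\<And>i j. i \<le> j \<Longrightarrow> S i \<subseteq> S j" using inc by (rule lift_Suc_mono_le)
  have "A \<in> gen \<Omega> (S (max k1 k2))" "C \<in> gen \<Omega> (S (max k1 k2))"
    using k gen_mono[OF mono[of k1 "max k1 k2"]] gen_mono[OF mono[of k2 "max k1 k2"]] by auto
  then show ?case by (auto intro: gen.intros)
qed

locale polish_prob = prob_space M + Metric_space "space M" d
  for M :: "'a measure" and d :: "'a \<Rightarrow> 'a \<Rightarrow> real" +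
  assumes mcompl: "mcomplete"
    and sets_open: "sets M = sigma_sets (space M) {U. openin mtopology U}"
    and sep: "separable_space mtopology"
begin

lemma open_sets: "openin mtopology U \<Longrightarrow> U \<in> sets M"
  using sets_open by auto

lemma closed_sets: "closedin mtopology F \<Longrightarrow> F \<in> sets M"
proof -
  assume F: "closedin mtopology F"
  then have "openin mtopology (space M - F)" by (simp add: closedin_def)
  then have "space M - F \<in> sets M" by (rule open_sets)
  then have "space M - (space M - F) \<in> sets M" by auto
  moreover have "space M - (space M - F) = F" using closedin_subset[OF F] by auto
  ultimately show ?thesis by simp
qed

lemma compact_closed: "compactin mtopology K \<Longrightarrow> closedin mtopology K"
  by (rule compactin_imp_closedin[OF Hausdorff_space_mtopology])

lemma dense_set:
  obtains D where "countable D" "D \<subseteq> space M" "D \<noteq> {}"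
    "\<And>x r. x \<in> space M \<Longrightarrow> 0 < r \<Longrightarrow> \<exists>c\<in>D. d x c < r"
proof -
  obtain D where D: "countable D" "D \<subseteq> space M" "mtopology closure_of D = space M"
    using sep unfolding separable_space_def by auto
  have dn: "\<exists>c\<in>D. d x c < r" if "x \<in> space M" "0 < r" for x r
    using D(3) that unfolding metric_closure_of by auto
  have "D \<noteq> {}" using dn not_empty by (metis ex_in_conv zero_less_one empty_iff)
  then show ?thesis using that D dn by blast
qed

definition "R = {A \<in> sets M. \<forall>e>0. \<exists>F U. closedin mtopology F \<and> openin mtopology U \<and>
   F \<subseteq> A \<and> A \<subseteq> U \<and> measure M (U - F) < e}"

lemma R_sub: "R \<subseteq> sets M" unfolding R_def by auto

lemma R_open:
  assumes U: "openin mtopology U"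
  shows "U \<in> R"
proof -
  define F where "F n = {x \<in> space M. \<forall>y\<in>space M - U. 1 / Suc n \<le> d x y}" for n :: nat
  have Fc: "closedin mtopology (F n)" for n
    unfolding closedin_metric
  proof (intro conjI allI impI)
    show "F n \<subseteq> space M" unfolding F_def by auto
    fix x assume x: "x \<in> space M - F n"
    then obtain y where y: "y \<in> space M - U" "d x y < 1 / Suc n" unfolding F_def by auto
    define r where "r = 1 / Suc n - d x y"
    have r: "r > 0" using y by (simp add: r_def)
    have "disjnt (F n) (mball x r)" unfolding disjnt_def
    proof (rule equals0I)
      fix z assume "z \<in> F n \<inter> mball x r"
      then have z: "z \<in> F n" "z \<in> mball x r" by auto
      then have "d z y \<le> d z x + d x y" using y x by (intro triangle) auto
      also have "\<dots> < 1 / Suc n" using z by (auto simp: r_def commute)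
      finally have lt: "d z y < 1 / Suc n" .
      have "1 / Suc n \<le> d z y" using z(1) y(1) unfolding F_def by blast
      then show False using lt by linarith
    qed
    then show "\<exists>r>0. disjnt (F n) (mball x r)" using r by blast
  qed
  have FU: "F n \<subseteq> U" for n
  proof
    fix x assume x: "x \<in> F n"
    show "x \<in> U"
    proof (rule ccontr)
      assume "x \<notin> U"
      moreover have xM: "x \<in> space M" and "\<forall>y\<in>space M - U. 1 / Suc n \<le> d x y" using x unfolding F_def by auto
      ultimately have "1 / Suc n \<le> d x x" by blast
      moreover have "d x x = 0" using xM by simp
      ultimately show False by simp
    qed
  qed
  have UF: "U = (\<Union>n. F n)"
  proof
    show "(\<Union>n. F n) \<subseteq> U" using FU by auto
    show "U \<subseteq> (\<Union>n. F n)"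
    proof
      fix x assume x: "x \<in> U"
      then obtain r where r: "r > 0" "mball x r \<subseteq> U" using U unfolding openin_mtopology by auto
      obtain n where n: "1 / Suc n < r" using r(1) by (metis nat_approx_posE)
      have xM: "x \<in> space M" using x U openin_subset by fastforce
      have "x \<in> F n" unfolding F_def
      proof (intro CollectI conjI ballI xM)
        fix y assume y: "y \<in> space M - U"
        then have "y \<notin> mball x r" using r by auto
        then have "r \<le> d x y" using xM y by auto
        then show "1 / Suc n \<le> d x y" using n by simp
      qed
      then show "x \<in> (\<Union>n. F n)" by auto
    qed
  qed
  have inc: "incseq F"
  proof (rule incseq_SucI)
    fix n show "F n \<subseteq> F (Suc n)" unfolding F_def
      by (auto intro: order_trans[rotated] simp: frac_le)
  qed
  have Fs: "range F \<subseteq> sets M" using Fc closed_sets by auto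
  have lim: "(\<lambda>n. measure M (F n)) \<longlonglongrightarrow> measure M U"
    using finite_Lim_measure_incseq[OF Fs inc] UF by simp
  show ?thesis unfolding R_def
  proof (intro CollectI conjI allI impI)
    show "U \<in> sets M" by (rule open_sets[OF U])
    fix e :: real assume e: "e > 0"
    from lim e obtain n where "\<bar>measure M (F n) - measure M U\<bar> < e"
      by (metis LIMSEQ_D real_norm_def order.refl)
    moreover have "measure M (U - F n) = measure M U - measure M (F n)"
      using FU Fs open_sets[OF U] by (intro finite_measure_Diff) auto
    ultimately have "measure M (U - F n) < e" by simp
    then show "\<exists>F U'. closedin mtopology F \<and> openin mtopology U' \<and> F \<subseteq> U \<and> U \<subseteq> U' \<and> measure M (U' - F) < e"
      using Fc FU U by blast
  qed
qed

lemma R_compl: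
  assumes A: "A \<in> R"
  shows "space M - A \<in> R"
  unfolding R_def
proof (intro CollectI conjI allI impI)
  show "space M - A \<in> sets M" using A R_sub by auto
  fix e :: real assume e: "e > 0"
  then obtain F U where FU: "closedin mtopology F" "openin mtopology U" "F \<subseteq> A" "A \<subseteq> U" "measure M (U - F) < e"
    using A unfolding R_def by blast
  have "closedin mtopology (space M - U)" using FU(2) by (simp add: closedin_diff)
  moreover have "openin mtopology (space M - F)" using FU(1) by (simp add: openin_diff)
  moreover have "(space M - F) - (space M - U) = U - F" using FU openin_subset[OF FU(2)] by auto
  ultimately show "\<exists>F U. closedin mtopology F \<and> openin mtopology U \<and> F \<subseteq> space M - A \<and> space M - A \<subseteq> U \<and> measure M (U - F) < e"
    using FU by (intro exI[of _ "space M - U"] exI[of _ "space M - F"]) auto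
qed

lemma R_Un:
  assumes A: "A \<in> R" and C: "C \<in> R"
  shows "A \<union> C \<in> R"
  unfolding R_def
proof (intro CollectI conjI allI impI)
  show "A \<union> C \<in> sets M" using A C R_sub by auto
  fix e :: real assume e: "e > 0"
  then have e2: "e/2 > 0" by simp
  obtain F1 U1 where 1: "closedin mtopology F1" "openin mtopology U1" "F1 \<subseteq> A" "A \<subseteq> U1" "measure M (U1 - F1) < e/2"
    using A e2 unfolding R_def by blast
  obtain F2 U2 where 2: "closedin mtopology F2" "openin mtopology U2" "F2 \<subseteq> C" "C \<subseteq> U2" "measure M (U2 - F2) < e/2"
    using C e2 unfolding R_def by blast
  have s: "U1 - F1 \<in> sets M" "U2 - F2 \<in> sets M"
    using 1 2 open_sets closed_sets by auto
  have "measure M ((U1 \<union> U2) - (F1 \<union> F2)) \<le> measure M ((U1 - F1) \<union> (U2 - F2))"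
    using s by (intro finite_measure_mono) auto
  also have "\<dots> \<le> measure M (U1 - F1) + measure M (U2 - F2)"
    using s by (intro measure_Un_le) auto
  finally have "measure M ((U1 \<union> U2) - (F1 \<union> F2)) < e" using 1 2 by simp
  then show "\<exists>F U. closedin mtopology F \<and> openin mtopology U \<and> F \<subseteq> A \<union> C \<and> A \<union> C \<subseteq> U \<and> measure M (U - F) < e"
    using 1 2 by (intro exI[of _ "F1 \<union> F2"] exI[of _ "U1 \<union> U2"]) auto
qed

lemma R_algebra: "algebra (space M) R"
  unfolding algebra_iff_Un
proof (intro conjI ballI)
  show "R \<subseteq> Pow (space M)" using R_sub sets.sets_into_space by auto
  have "space M - space M \<in> R" by (intro R_compl R_open) simp
  then show "{} \<in> R" by simp
qed (auto intro: R_compl R_Un)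

lemma R_closed: "closedin mtopology F \<Longrightarrow> F \<in> R"
proof -
  assume F: "closedin mtopology F"
  have "space M - (space M - F) \<in> R"
    using F by (intro R_compl R_open) (simp add: closedin_def)
  moreover have "space M - (space M - F) = F" using closedin_subset[OF F] by auto
  ultimately show ?thesis by simp
qed

lemma tb_cover:
  assumes S: "S \<subseteq> space M" and cov: "\<And>e. e > 0 \<Longrightarrow> \<exists>C. finite C \<and> S \<subseteq> (\<Union>c\<in>C. mcball c e)"
  shows "mtotally_bounded S"
  unfolding mtotally_bounded_def
proof (intro allI impI)
  fix e :: real assume e: "e > 0"
  then obtain C where C: "finite C" "S \<subseteq> (\<Union>c\<in>C. mcball c (e/3))" using cov[of "e/3"] by auto
  define C' where "C' = {c \<in> C. mcball c (e/3) \<inter> S \<noteq> {}}"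
  define p where "p c = (SOME q. q \<in> mcball c (e/3) \<inter> S)" for c
  have p: "p c \<in> mcball c (e/3) \<inter> S" if "c \<in> C'" for c
  proof -
    from that obtain q where "q \<in> mcball c (e/3) \<inter> S" unfolding C'_def by blast
    then show ?thesis unfolding p_def by (rule someI)
  qed
  show "\<exists>K. finite K \<and> K \<subseteq> S \<and> S \<subseteq> (\<Union>x\<in>K. mball x e)"
  proof (intro exI conjI)
    have "C' \<subseteq> C" unfolding C'_def by blast
    then show "finite (p ` C')" using C(1) by (metis finite_imageI finite_subset)
    show "p ` C' \<subseteq> S" using p by auto
    show "S \<subseteq> (\<Union>x\<in>p ` C'. mball x e)"
    proof
      fix x assume x: "x \<in> S"
      then obtain c where c: "c \<in> C" "x \<in> mcball c (e/3)" using C(2) by auto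
      then have cC: "c \<in> C'" using x unfolding C'_def by auto
      have pc: "p c \<in> mcball c (e/3)" using p[OF cC] by auto
      have "d (p c) x \<le> d (p c) c + d c x" using pc c by (intro triangle) auto
      also have "\<dots> \<le> e/3 + e/3" using pc c by (auto simp: commute)
      also have "\<dots> < e" using e by simp
      finally have "x \<in> mball (p c) e" using pc c by auto
      then show "x \<in> (\<Union>x\<in>p ` C'. mball x e)" using cC by auto
    qed
  qed
qed

lemma tight:
  assumes e: "e > 0"
  shows "\<exists>K. compactin mtopology K \<and> measure M (space M - K) < e"
proof -
  obtain D where D: "countable D" "D \<subseteq> space M" "D \<noteq> {}"
    "\<And>x r. x \<in> space M \<Longrightarrow> 0 < r \<Longrightarrow> \<exists>c\<in>D. d x c < r" using dense_set by blast
  define c where "c = from_nat_into D"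
  have cD: "c i \<in> D" for i unfolding c_def using D(3) by (rule from_nat_into)
  have Dc: "\<And>y. y \<in> D \<Longrightarrow> \<exists>i. c i = y" unfolding c_def using D(1) by (metis from_nat_into_to_nat_on)
  define Bs where "Bs k N = (\<Union>i<N. mcball (c i) (1 / Suc k))" for k N :: nat
  have Bs_closed: "closedin mtopology (Bs k N)" for k N
    unfolding Bs_def by (intro closedin_Union) auto
  have Bs_sets: "Bs k N \<in> sets M" for k N by (rule closed_sets[OF Bs_closed])
  have Bs_inc: "incseq (Bs k)" for k unfolding Bs_def incseq_def by (auto, meson lessThan_iff less_le_trans)
  have Bs_U: "(\<Union>N. Bs k N) = space M" for k
  proof
    show "(\<Union>N. Bs k N) \<subseteq> space M" unfolding Bs_def by auto
    show "space M \<subseteq> (\<Union>N. Bs k N)"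
    proof
      fix x assume x: "x \<in> space M"
      obtain y where y: "y \<in> D" "d x y < 1 / Suc k" using D(4)[OF x, of "1 / Suc k"] by auto
      obtain i where i: "c i = y" using Dc[OF y(1)] by auto
      have "x \<in> mcball (c i) (1 / Suc k)" using x y i D(2) by (auto simp: commute)
      then show "x \<in> (\<Union>N. Bs k N)" unfolding Bs_def by blast
    qed
  qed
  have "\<exists>N. measure M (space M - Bs k N) < (e/2) * (1/2)^Suc k" for k
  proof -
    have lim: "(\<lambda>N. measure M (Bs k N)) \<longlonglongrightarrow> measure M (space M)"
      using finite_Lim_measure_incseq[of "Bs k"] Bs_sets Bs_inc[of k] Bs_U[of k] by auto
    have pos: "(e/2) * (1/2)^Suc k > 0" using e by simp
    from LIMSEQ_D[OF lim pos] obtain N where N: "\<bar>measure M (Bs k N) - measure M (space M)\<bar> < (e/2) * (1/2)^Suc k"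
      by auto
    then have h: "-((e/2) * (1/2)^Suc k) < measure M (Bs k N) - measure M (space M)"
      by (simp only: abs_less_iff) linarith
    moreover have "measure M (space M - Bs k N) = measure M (space M) - measure M (Bs k N)"
      using Bs_sets by (simp add: prob_compl prob_space)
    ultimately have "measure M (space M - Bs k N) < (e/2) * (1/2)^Suc k" by linarith
    then show ?thesis by blast
  qed
  then obtain N where N: "\<And>k. measure M (space M - Bs k (N k)) < (e/2) * (1/2)^Suc k" by metis
  define K where "K = (\<Inter>k. Bs k (N k))"
  have Kc: "closedin mtopology K" unfolding K_def using Bs_closed by (intro closedin_INT) auto
  have KM: "K \<subseteq> space M" unfolding K_def Bs_def by auto
  have Ktb: "mtotally_bounded K"
  proof (rule tb_cover[OF KM])
    fix r :: real assume r: "r > 0"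
    obtain k where k: "1 / Suc k < r" using r by (metis nat_approx_posE)
    have "K \<subseteq> (\<Union>i\<in>{..<N k}. mcball (c i) r)"
    proof
      fix x assume "x \<in> K"
      then have "x \<in> Bs k (N k)" unfolding K_def by auto
      then obtain i where "i < N k" "x \<in> mcball (c i) (1 / Suc k)" unfolding Bs_def by auto
      then show "x \<in> (\<Union>i\<in>{..<N k}. mcball (c i) r)" using k by auto
    qed
    then show "\<exists>C. finite C \<and> K \<subseteq> (\<Union>c\<in>C. mcball c r)"
      by (intro exI[of _ "c ` {..<N k}"]) auto
  qed
  have Kcomp: "compactin mtopology K"
    using Ktb mtotally_bounded_eq_compact_closure_of[OF mcompl] closure_of_closedin[OF Kc] by auto
  have sg: "summable (\<lambda>k. (e/2) * (1/2::real)^Suc k)"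
    by (intro summable_mult sums_summable[OF power_half_series])
  have sm: "summable (\<lambda>k. measure M (space M - Bs k (N k)))"
  proof (rule summable_comparison_test'[OF sg])
    fix n :: nat
    show "norm (measure M (space M - Bs n (N n))) \<le> (e/2) * (1/2)^Suc n"
      using N[of n] by simp
  qed
  have "measure M (space M - K) = measure M (\<Union>k. space M - Bs k (N k))"
  proof -
    have "space M - K = (\<Union>k. space M - Bs k (N k))" unfolding K_def by blast
    then show ?thesis by simp
  qed
  also have "\<dots> \<le> (\<Sum>k. measure M (space M - Bs k (N k)))"
    by (rule finite_measure_subadditive_countably) (use Bs_sets sm in auto)
  also have "\<dots> \<le> (\<Sum>k. (e/2) * (1/2)^Suc k)"
    by (rule suminf_le[OF _ sm sg]) (use N in \<open>simp add: less_imp_le\<close>)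
  also have "\<dots> = e/2" using sums_mult[OF power_half_series, of "e/2"] by (simp add: sums_iff)
  finally show ?thesis using Kcomp e by (intro exI[of _ K]) auto
qed

lemma R_compact_approx:
  assumes A: "A \<in> R" and e: "e > 0"
  shows "\<exists>K. compactin mtopology K \<and> K \<subseteq> A \<and> measure M (A - K) < e"
proof -
  have e2: "e/2 > 0" using e by simp
  obtain F U where FU: "closedin mtopology F" "openin mtopology U" "F \<subseteq> A" "A \<subseteq> U" "measure M (U - F) < e/2"
    using A e2 unfolding R_def by blast
  obtain K0 where K0: "compactin mtopology K0" "measure M (space M - K0) < e/2" using tight[OF e2] by auto
  have Ks: "compactin mtopology (F \<inter> K0)" by (rule closed_Int_compactin[OF FU(1) K0(1)])
  have s: "A \<in> sets M" "F \<in> sets M" "K0 \<in> sets M" "U \<in> sets M"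
    using A R_sub closed_sets FU open_sets compact_closed K0 by auto
  have "measure M (A - F \<inter> K0) \<le> measure M ((U - F) \<union> (space M - K0))"
  proof (rule finite_measure_mono)
    show "A - F \<inter> K0 \<subseteq> (U - F) \<union> (space M - K0)" using FU sets.sets_into_space[OF s(1)] by blast
  qed (use s in auto)
  also have "\<dots> \<le> measure M (U - F) + measure M (space M - K0)"
    using s by (intro measure_Un_le) auto
  finally have "measure M (A - F \<inter> K0) < e" using FU K0 by simp
  then show ?thesis using Ks FU by (intro exI[of _ "F \<inter> K0"]) auto
qed

lemma base_exists:
  obtains Bs where "countable Bs" "Bs \<subseteq> R"
    "\<And>G. Bs \<subseteq> G \<Longrightarrow> G \<subseteq> sets M \<Longrightarrow> sets M = sigma_sets (space M) G"
proof -
  obtain D where D: "countable D" "D \<subseteq> space M" "D \<noteq> {}"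
    "\<And>x r. x \<in> space M \<Longrightarrow> 0 < r \<Longrightarrow> \<exists>c\<in>D. d x c < r" using dense_set by blast
  define Bs where "Bs = (\<lambda>(c, n::nat). mball c (1 / Suc n)) ` (D \<times> UNIV)"
  have cB: "countable Bs" unfolding Bs_def using D(1) by auto
  have Bo: "\<And>b. b \<in> Bs \<Longrightarrow> openin mtopology b" unfolding Bs_def by auto
  have cover: "U = \<Union>{b \<in> Bs. b \<subseteq> U}" if U: "openin mtopology U" for U
  proof
    show "\<Union>{b \<in> Bs. b \<subseteq> U} \<subseteq> U" by blast
    show "U \<subseteq> \<Union>{b \<in> Bs. b \<subseteq> U}"
    proof
      fix x assume x: "x \<in> U"
      then obtain r where r: "r > 0" "mball x r \<subseteq> U" using U unfolding openin_mtopology by auto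
      have xM: "x \<in> space M" using x U openin_subset by fastforce
      obtain n where n: "1 / Suc n < r / 2" using r by (metis nat_approx_posE half_gt_zero)
      obtain c where c: "c \<in> D" "d x c < 1 / Suc n" using D(4)[OF xM, of "1 / Suc n"] by auto
      have cM: "c \<in> space M" using c D(2) by auto
      have sub: "mball c (1 / Suc n) \<subseteq> U"
      proof
        fix z assume z: "z \<in> mball c (1 / Suc n)"
        have "d x z \<le> d x c + d c z" using xM cM z by (intro triangle) auto
        also have "\<dots> < r" using c z n by auto
        finally show "z \<in> U" using r z xM by auto
      qed
      have "x \<in> mball c (1 / Suc n)" using xM cM c by (auto simp: commute)
      moreover have "mball c (1 / Suc n) \<in> Bs" unfolding Bs_def using c by auto
      ultimately show "x \<in> \<Union>{b \<in> Bs. b \<subseteq> U}" using sub by blast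
    qed
  qed
  have eq: "sets M = sigma_sets (space M) G" if G: "Bs \<subseteq> G" "G \<subseteq> sets M" for G
  proof
    show "sigma_sets (space M) G \<subseteq> sets M" using G(2) by (rule sets.sigma_sets_subset)
    have "{U. openin mtopology U} \<subseteq> sigma_sets (space M) G"
    proof
      fix U assume "U \<in> {U. openin mtopology U}"
      then have U: "openin mtopology U" by simp
      have "\<Union>{b \<in> Bs. b \<subseteq> U} \<in> sigma_sets (space M) G"
        by (rule sigma_sets_UNION) (use cB G(1) in \<open>auto intro: countable_subset\<close>)
      then show "U \<in> sigma_sets (space M) G" using cover[OF U] by simp
    qed
    then show "sets M \<subseteq> sigma_sets (space M) G" unfolding sets_open by (rule sigma_sets_mono)
  qed
  show ?thesis using that[OF cB _ eq] Bo R_open by blast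
qed

definition kap :: "'a set \<Rightarrow> nat \<Rightarrow> 'a set" where
  "kap A n = (SOME K. compactin mtopology K \<and> K \<subseteq> A \<and> measure M (A - K) < 1 / Suc n)"

lemma kap:
  assumes "A \<in> R"
  shows "compactin mtopology (kap A n)" "kap A n \<subseteq> A" "measure M (A - kap A n) < 1 / Suc n"
proof -
  have "\<exists>K. compactin mtopology K \<and> K \<subseteq> A \<and> measure M (A - K) < 1 / Suc n"
    using R_compact_approx[OF assms, of "1 / Suc n"] by simp
  then have "compactin mtopology (kap A n) \<and> kap A n \<subseteq> A \<and> measure M (A - kap A n) < 1 / Suc n"
    unfolding kap_def by (rule someI_ex)
  then show "compactin mtopology (kap A n)" "kap A n \<subseteq> A" "measure M (A - kap A n) < 1 / Suc n"
    by auto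
qed

lemma alg_exists:
  "\<exists>\<A>. countable \<A> \<and> algebra (space M) \<A> \<and> \<A> \<subseteq> sets M \<and> sets M = sigma_sets (space M) \<A> \<and>
     (\<forall>A\<in>\<A>. \<forall>n. kap A n \<in> \<A> \<and> kap A n \<subseteq> A \<and> compactin mtopology (kap A n) \<and>
        measure M (A - kap A n) < 1 / Suc n)"
proof -
  obtain Bs where Bs: "countable Bs" "Bs \<subseteq> R"
    "\<And>G. Bs \<subseteq> G \<Longrightarrow> G \<subseteq> sets M \<Longrightarrow> sets M = sigma_sets (space M) G" using base_exists by blast
  define S where "S = rec_nat Bs (\<lambda>k Sk. Sk \<union> (\<lambda>(A, n). kap A n) ` (gen (space M) Sk \<times> UNIV))"
  have S0: "S 0 = Bs" unfolding S_def by simp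
  have SS: "S (Suc k) = S k \<union> (\<lambda>(A, n). kap A n) ` (gen (space M) (S k) \<times> UNIV)" for k
    unfolding S_def by simp
  have inv: "S k \<subseteq> R \<and> countable (S k)" for k
  proof (induct k)
    case 0 then show ?case using Bs S0 by simp
  next
    case (Suc k)
    have g: "gen (space M) (S k) \<subseteq> R" using Suc by (intro gen_subset R_algebra) auto
    have "(\<lambda>(A, n). kap A n) ` (gen (space M) (S k) \<times> UNIV) \<subseteq> R"
      using g kap(1) compact_closed R_closed by auto
    moreover have "countable ((\<lambda>(A, n). kap A n) ` (gen (space M) (S k) \<times> UNIV))"
      using Suc gen_countable by auto
    ultimately show ?case using Suc SS by auto
  qed
  define \<A> where "\<A> = gen (space M) (\<Union>k. S k)"
  have UR: "(\<Union>k. S k) \<subseteq> R" using inv by auto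
  have AR: "\<A> \<subseteq> R" unfolding \<A>_def using UR by (intro gen_subset R_algebra)
  have "countable \<A>" unfolding \<A>_def using inv by (intro gen_countable) auto
  moreover have "algebra (space M) \<A>"
    unfolding \<A>_def using UR R_sub sets.sets_into_space by (intro gen_algebra) blast
  moreover have "\<A> \<subseteq> sets M" using AR R_sub by auto
  moreover have "sets M = sigma_sets (space M) \<A>"
  proof (rule Bs(3))
    show "Bs \<subseteq> \<A>" unfolding \<A>_def using S0 by (auto intro: gen_basic)
  qed (use AR R_sub in auto)
  moreover have "kap A n \<in> \<A> \<and> kap A n \<subseteq> A \<and> compactin mtopology (kap A n) \<and>
        measure M (A - kap A n) < 1 / Suc n" if A: "A \<in> \<A>" for A n
  proof -
    obtain k where k: "A \<in> gen (space M) (S k)"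
      using gen_chain[of S, OF _ A[unfolded \<A>_def]] SS by auto
    have "kap A n \<in> S (Suc k)" using SS k by auto
    then have "kap A n \<in> \<A>" unfolding \<A>_def by (auto intro: gen_basic)
    then show ?thesis using kap[of A n] A AR by auto
  qed
  ultimately show ?thesis by blast
qed

end

lemma geo_half: "(\<Sum>i\<le>j. (1/2::real)^Suc i) = 1 - (1/2)^Suc j"
  by (induct j) auto

lemma compact_class_cont:
  fixes \<nu> :: "'a set \<Rightarrow> real"
  assumes alg: "algebra \<Omega> \<A>"
    and nu_nonneg: "\<And>A. A \<in> \<A> \<Longrightarrow> 0 \<le> \<nu> A"
    and nu_add: "\<And>A C. A \<in> \<A> \<Longrightarrow> C \<in> \<A> \<Longrightarrow> A \<inter> C = {} \<Longrightarrow> \<nu> (A \<union> C) = \<nu> A + \<nu> C"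
    and kap: "\<And>A n. A \<in> \<A> \<Longrightarrow> \<kappa> A n \<in> \<A> \<and> \<kappa> A n \<subseteq> A \<and> compactin X (\<kappa> A n) \<and> closedin X (\<kappa> A n)"
    and approx: "\<And>A \<delta>. A \<in> \<A> \<Longrightarrow> \<delta> > 0 \<Longrightarrow> \<exists>n. \<nu> (A - \<kappa> A n) < \<delta>"
    and A: "range A \<subseteq> \<A>" "decseq A" "(\<Inter>i. A i) = {}"
  shows "(\<lambda>i. \<nu> (A i)) \<longlonglongrightarrow> 0"
proof -
  interpret algebra \<Omega> \<A> by (rule alg)
  have e0: "\<nu> {} = 0" using nu_add[of "{}" "{}"] by simp
  have mono: "\<nu> A \<le> \<nu> C" if "A \<in> \<A>" "C \<in> \<A>" "A \<subseteq> C" for A C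
  proof -
    have "\<nu> C = \<nu> (A \<union> (C - A))" using that by (simp add: Un_absorb1)
    also have "\<dots> = \<nu> A + \<nu> (C - A)" using that by (intro nu_add) auto
    finally show ?thesis using nu_nonneg[of "C - A"] that by auto
  qed
  have diff: "\<nu> (C - A) = \<nu> C - \<nu> A" if "A \<in> \<A>" "C \<in> \<A>" "A \<subseteq> C" for A C
  proof -
    have "\<nu> C = \<nu> (A \<union> (C - A))" using that by (simp add: Un_absorb1)
    also have "\<dots> = \<nu> A + \<nu> (C - A)" using that by (intro nu_add) auto
    finally show ?thesis by simp
  qed
  have sub: "\<nu> (A \<union> C) \<le> \<nu> A + \<nu> C" if "A \<in> \<A>" "C \<in> \<A>" for A C
  proof -
    have "\<nu> (A \<union> C) = \<nu> (A \<union> (C - A))" by (simp add: Un_Diff_cancel)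
    also have "\<dots> = \<nu> A + \<nu> (C - A)" using that by (intro nu_add) auto
    also have "\<dots> \<le> \<nu> A + \<nu> C" using that by (intro add_left_mono mono) auto
    finally show ?thesis .
  qed
  have fsub: "\<nu> (\<Union>i\<in>{..j}. C i) \<le> (\<Sum>i\<le>j. \<nu> (C i))" if C: "\<And>i. C i \<in> \<A>" for C :: "nat \<Rightarrow> 'a set" and j
  proof (induct j)
    case 0 then show ?case by simp
  next
    case (Suc j)
    have "(\<Union>i\<in>{..Suc j}. C i) = C (Suc j) \<union> (\<Union>i\<in>{..j}. C i)" by (auto simp: atMost_Suc)
    then have "\<nu> (\<Union>i\<in>{..Suc j}. C i) \<le> \<nu> (C (Suc j)) + \<nu> (\<Union>i\<in>{..j}. C i)"
      using C by (simp add: sub finite_UN)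
    also have "\<dots> \<le> \<nu> (C (Suc j)) + (\<Sum>i\<le>j. \<nu> (C i))" using Suc by simp
    finally show ?case by (simp add: add.commute)
  qed
  have Adec: "A j \<subseteq> A i" if "i \<le> j" for i j using A(2) that by (simp add: decseq_def)
  have small: "\<exists>j. \<nu> (A j) < r" if r: "r > 0" for r
  proof (rule ccontr)
    assume "\<not> (\<exists>j. \<nu> (A j) < r)"
    then have big: "\<And>j. r \<le> \<nu> (A j)" by (simp add: not_less)
    have "\<exists>n. \<nu> (A j - \<kappa> (A j) n) < r/2 * (1/2)^Suc j" for j
      using approx[of "A j" "r/2 * (1/2)^Suc j"] A(1) r by auto
    then obtain n where n: "\<And>j. \<nu> (A j - \<kappa> (A j) (n j)) < r/2 * (1/2)^Suc j" by metis
    define K where "K j = \<kappa> (A j) (n j)" for j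
    define L where "L j = (\<Inter>i\<in>{..j}. K i)" for j
    have KA: "K j \<in> \<A>" "K j \<subseteq> A j" "compactin X (K j)" "closedin X (K j)" for j
      using kap[of "A j" "n j"] A(1) by (auto simp: K_def)
    have LA: "L j \<in> \<A>" for j unfolding L_def using KA by (intro finite_INT) auto
    have LK: "L j \<subseteq> K j" for j unfolding L_def by auto
    have Lc: "closedin X (L j)" for j unfolding L_def using KA by (intro closedin_INT) auto
    have Ldec: "L j \<subseteq> L i" if "i \<le> j" for i j unfolding L_def using that by auto
    have AK: "A j - K j \<in> \<A>" for j using KA(1)[of j] A(1) by (intro Diff) auto
    have Lpos: "\<nu> (L j) > 0" for j
    proof -
      have cover: "A j - L j \<subseteq> (\<Union>i\<in>{..j}. A i - K i)"
      proof
        fix x assume x: "x \<in> A j - L j"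
        then obtain i where i: "i \<le> j" "x \<notin> K i" unfolding L_def by auto
        then show "x \<in> (\<Union>i\<in>{..j}. A i - K i)" using x Adec[OF i(1)] by auto
      qed
      have "\<nu> (A j) - \<nu> (L j) = \<nu> (A j - L j)"
      proof (rule diff[symmetric])
        show "L j \<subseteq> A j" using LK[of j] KA(2)[of j] by blast
      qed (use LA A(1) in auto)
      also have "\<dots> \<le> \<nu> (\<Union>i\<in>{..j}. A i - K i)"
        using cover LA A(1) AK KA(1) by (intro mono Diff finite_UN) auto
      also have "\<dots> \<le> (\<Sum>i\<le>j. \<nu> (A i - K i))" using AK by (intro fsub)
      also have "\<dots> \<le> (\<Sum>i\<le>j. r/2 * (1/2)^Suc i)"
        using n by (intro sum_mono less_imp_le) (simp add: K_def)
      also have "\<dots> = r/2 * (\<Sum>i\<le>j. (1/2)^Suc i)" by (rule sum_distrib_left[symmetric])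
      also have "\<dots> = r/2 * (1 - (1/2)^Suc j)" by (simp only: geo_half)
      also have "\<dots> < r/2" using r by simp
      finally have "\<nu> (A j) - \<nu> (L j) < r/2" .
      then show ?thesis using big[of j] r by linarith
    qed
    have Lne: "L j \<noteq> {}" for j using Lpos[of j] e0 by auto
    have "K 0 \<inter> \<Inter>(range L) \<noteq> {}"
    proof -
      have "\<forall>\<U>. (\<forall>C\<in>\<U>. closedin X C) \<and> (\<forall>\<F>. finite \<F> \<and> \<F> \<subseteq> \<U> \<longrightarrow> K 0 \<inter> \<Inter>\<F> \<noteq> {}) \<longrightarrow> K 0 \<inter> \<Inter>\<U> \<noteq> {}"
        using KA(3)[of 0] unfolding compactin_fip by auto
      moreover have "\<forall>\<F>. finite \<F> \<and> \<F> \<subseteq> range L \<longrightarrow> K 0 \<inter> \<Inter>\<F> \<noteq> {}"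
      proof (intro allI impI)
        fix \<F> assume F: "finite \<F> \<and> \<F> \<subseteq> range L"
        then obtain J where J: "finite J" "\<F> = L ` J" by (meson finite_subset_image subset_UNIV)
        show "K 0 \<inter> \<Inter>\<F> \<noteq> {}"
        proof (cases "J = {}")
          case True
          then show ?thesis using J Lne[of 0] LK[of 0] by auto
        next
          case False
          define m where "m = Max J"
          have "L m \<subseteq> L i" if "i \<in> J" for i
            using Ldec[of i m] that J(1) unfolding m_def by simp
          then have "L m \<subseteq> K 0 \<inter> \<Inter>\<F>"
            using J LK[of 0] Ldec[of 0 m] by auto
          then show ?thesis using Lne[of m] by blast
        qed
      qed
      ultimately show ?thesis using Lc by auto
    qed
    then obtain x where "\<And>j. x \<in> L j" by auto
    then have "\<And>j. x \<in> A j" using LK KA(2) by blast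
    then show False using A(3) by auto
  qed
  show ?thesis
  proof (rule LIMSEQ_I)
    fix r :: real assume r: "0 < r"
    obtain j where j: "\<nu> (A j) < r" using small[OF r] by auto
    have "norm (\<nu> (A n) - 0) < r" if "n \<ge> j" for n
    proof -
      have "\<nu> (A n) \<le> \<nu> (A j)" using A(1) Adec[OF that] by (intro mono) auto
      moreover have "0 \<le> \<nu> (A n)" using nu_nonneg[of "A n"] A(1) by auto
      ultimately show ?thesis using j by simp
    qed
    then show "\<exists>no. \<forall>n\<ge>no. norm (\<nu> (A n) - 0) < r" by blast
  qed
qed



locale pp = polish_prob M d + pcs M B
  for M :: "'a measure" and d and B
begin

definition f :: "'a set \<Rightarrow> 'a \<Rightarrow> real" where
  "f A x = real_cond_exp M Fm (indicator A) x"

lemma f_Fm[measurable]: "f A \<in> borel_measurable Fm"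
  unfolding f_def by (rule borel_measurable_cond_exp)

lemma f_M[measurable]: "f A \<in> borel_measurable M"
  unfolding f_def by (rule borel_measurable_cond_exp2)

lemma f_int: "A \<in> sets M \<Longrightarrow> integrable M (f A)"
  unfolding f_def by (intro fs.real_cond_exp_int(1)) simp

lemma f_nonneg: "A \<in> sets M \<Longrightarrow> AE x in M. 0 \<le> f A x"
  unfolding f_def by (intro fs.real_cond_exp_pos) auto

lemma f_space: "AE x in M. f (space M) x = 1"
proof -
  have "AE x in M. f (space M) x = indicator (space M) x"
    unfolding f_def
  proof (rule fs.real_cond_exp_F_meas)
    show "indicator (space M) \<in> borel_measurable Fm"
      by (rule borel_measurable_indicator) (metis sets.top space_Fm)
  qed simp
  then show ?thesis by (auto elim: AE_mp)
qed

lemma f_add: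
  assumes A: "A \<in> sets M" and C: "C \<in> sets M" and dj: "A \<inter> C = {}"
  shows "AE x in M. f (A \<union> C) x = f A x + f C x"
proof -
  have eq: "indicator (A \<union> C) = (\<lambda>x. indicator A x + indicator C x :: real)"
    using dj by (auto simp: indicator_disj_union)
  show ?thesis unfolding f_def eq
    by (rule fs.real_cond_exp_add) (use A C in auto)
qed

lemma f_integral: "A \<in> sets M \<Longrightarrow> C \<in> B \<Longrightarrow> (\<integral>x. indicator C x * f A x \<partial>M) = measure M (A \<inter> C)"
proof -
  assume A: "A \<in> sets M" and C: "C \<in> B"
  have CM: "C \<in> sets M" using C B_sub by auto
  have "(\<integral>x. indicator C x * f A x \<partial>M) = (\<integral>x\<in>C. real_cond_exp M Fm (indicator A) x \<partial>M)"
    by (simp add: set_lebesgue_integral_def f_def)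
  also have "\<dots> = (\<integral>x\<in>C. indicator A x \<partial>M)"
    using C A by (intro fs.real_cond_exp_intA[symmetric]) auto
  also have "\<dots> = measure M (A \<inter> C)"
    using A CM by (simp add: set_lebesgue_integral_def indicator_inter_arith[symmetric] Int_commute)
  finally show ?thesis .
qed

lemma f_small:
  assumes A: "A \<in> sets M" and K: "\<And>n. K n \<in> sets M" "\<And>n. K n \<subseteq> A"
    and small: "\<And>n. measure M (A - K n) < 1 / Suc n"
  shows "AE x in M. \<exists>n. f (A - K n) x < 1 / Suc m"
proof -
  define E where "E = {x \<in> space M. \<forall>n. 1 / Suc m \<le> f (A - K n) x}"
  have Es: "E \<in> sets M" unfolding E_def by measurable
  have AK: "\<And>n. A - K n \<in> sets M" using A K by auto
  have bound: "measure M E \<le> Suc m * (1 / Suc n)" for n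
  proof -
    have "measure M E \<le> measure M {x \<in> space M. 1 / Suc m \<le> f (A - K n) x}"
      using Es by (intro finite_measure_mono) (auto simp: E_def)
    also have "\<dots> \<le> (\<integral>x. f (A - K n) x \<partial>M) / (1 / Suc m)"
      by (rule integral_Markov_inequality_measure[OF f_int[OF AK] sets.top f_nonneg[OF AK]]) simp
    also have "(\<integral>x. f (A - K n) x \<partial>M) = measure M (A - K n)"
      unfolding f_def using fs.real_cond_exp_int(2)[of "indicator (A - K n)"] AK by simp
    finally have h: "measure M E \<le> measure M (A - K n) / (1 / Suc m)" .
    have "measure M (A - K n) / (1 / Suc m) = Suc m * measure M (A - K n)" by simp
    also have "\<dots> \<le> Suc m * (1 / Suc n)"
      using small[of n] by (intro mult_left_mono) auto
    finally show ?thesis using h by linarith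
  qed
  have "measure M E = 0"
  proof (rule ccontr)
    assume ne: "measure M E \<noteq> 0"
    then have pos: "measure M E > 0" using measure_nonneg[of M E] by linarith
    obtain n :: nat where n: "Suc m / measure M E < n" using reals_Archimedean2 by blast
    then have "Suc m < n * measure M E" using pos by (simp add: field_simps)
    also have "\<dots> \<le> Suc n * measure M E" using pos by (intro mult_right_mono) auto
    finally have "Suc m * (1 / Suc n) < measure M E" by (simp add: field_simps)
    then show False using bound[of n] by simp
  qed
  then have "E \<in> null_sets M" using Es by (simp add: emeasure_eq_measure null_sets_def)
  then have "AE x in M. x \<notin> E" by (rule AE_not_in)
  then show ?thesis by (rule AE_mp) (auto simp: E_def not_le intro!: AE_I2)
qed

lemma rcp_exists: "\<exists>e. is_rcp M B e"
proof -
  obtain \<A> where \<A>: "countable \<A>" "algebra (space M) \<A>" "\<A> \<subseteq> sets M" "sets M = sigma_sets (space M) \<A>"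
    and kapA: "\<And>A n. A \<in> \<A> \<Longrightarrow> kap A n \<in> \<A> \<and> kap A n \<subseteq> A \<and> compactin mtopology (kap A n) \<and>
        measure M (A - kap A n) < 1 / Suc n"
    using alg_exists by blast
  interpret Aalg: algebra "space M" \<A> by (rule \<A>(2))
  have AM: "\<And>A. A \<in> \<A> \<Longrightarrow> A \<in> sets M" using \<A>(3) by auto
  define P where "P x \<longleftrightarrow> (\<forall>A\<in>\<A>. 0 \<le> f A x) \<and> f (space M) x = 1 \<and>
      (\<forall>A\<in>\<A>. \<forall>C\<in>\<A>. A \<inter> C = {} \<longrightarrow> f (A \<union> C) x = f A x + f C x) \<and>
      (\<forall>A\<in>\<A>. \<forall>m. \<exists>n. f (A - kap A n) x < 1 / Suc m)" for x
  have aeP: "AE x in M. P x"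
  proof -
    have 1: "AE x in M. \<forall>A\<in>\<A>. 0 \<le> f A x"
      using \<A>(1) AM f_nonneg by (intro AE_ball_countable') auto
    have 2: "AE x in M. \<forall>A\<in>\<A>. \<forall>C\<in>\<A>. A \<inter> C = {} \<longrightarrow> f (A \<union> C) x = f A x + f C x"
    proof (rule AE_ball_countable'[OF _ \<A>(1)])
      fix A assume A: "A \<in> \<A>"
      show "AE x in M. \<forall>C\<in>\<A>. A \<inter> C = {} \<longrightarrow> f (A \<union> C) x = f A x + f C x"
      proof (rule AE_ball_countable'[OF _ \<A>(1)])
        fix C assume C: "C \<in> \<A>"
        show "AE x in M. A \<inter> C = {} \<longrightarrow> f (A \<union> C) x = f A x + f C x"
        proof (cases "A \<inter> C = {}")
          case True
          then show ?thesis using f_add[OF AM[OF A] AM[OF C] True] by simp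
        qed simp
      qed
    qed
    have 3: "AE x in M. \<forall>A\<in>\<A>. \<forall>m. \<exists>n. f (A - kap A n) x < 1 / Suc m"
    proof (rule AE_ball_countable'[OF _ \<A>(1)])
      fix A assume A: "A \<in> \<A>"
      show "AE x in M. \<forall>m. \<exists>n. f (A - kap A n) x < 1 / Suc m"
        unfolding AE_all_countable
        using kapA[OF A] AM[OF A] AM kapA by (intro allI f_small) auto
    qed
    show ?thesis using 1 2 3 f_space unfolding P_def by eventually_elim auto
  qed
  then obtain N where N: "N \<in> null_sets M" "{x \<in> space M. \<not> P x} \<subseteq> N" by (auto elim!: AE_E)
  define G0 where "G0 = space M - N"
  have G0B: "G0 \<in> B"
  proof -
    interpret Bs: sigma_algebra "space M" B by (rule B_sa)
    show ?thesis unfolding G0_def using nullset_in_B[OF N(1)] by auto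
  qed
  have PG: "\<And>x. x \<in> G0 \<Longrightarrow> P x" using N(2) unfolding G0_def by auto
  have aeG: "AE x in M. x \<in> G0"
    using AE_not_in[OF N(1)] by (rule AE_mp) (auto simp: G0_def intro!: AE_I2)
  have Gsp: "G0 \<subseteq> space M" unfolding G0_def by auto
  have topA: "space M \<in> \<A>" by (rule Aalg.top)
  have emptyA: "{} \<in> \<A>" by (rule Aalg.empty_sets)
  have ext: "\<exists>\<mu>. (\<forall>s\<in>\<A>. \<mu> s = ennreal (f s x)) \<and> measure_space (space M) (sigma_sets (space M) \<A>) \<mu>"
    if x: "x \<in> G0" for x
  proof -
    have Px: "P x" using PG[OF x] .
    have nn: "\<And>A. A \<in> \<A> \<Longrightarrow> 0 \<le> f A x" using Px unfolding P_def by auto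
    have add: "\<And>A C. A \<in> \<A> \<Longrightarrow> C \<in> \<A> \<Longrightarrow> A \<inter> C = {} \<Longrightarrow> f (A \<union> C) x = f A x + f C x"
      using Px unfolding P_def by auto
    have f0: "f {} x = 0" using add[OF emptyA emptyA] by simp
    show ?thesis
    proof (rule Aalg.caratheodory_empty_continuous)
      show "positive \<A> (\<lambda>s. ennreal (f s x))" unfolding positive_def using f0 by simp
      show "additive \<A> (\<lambda>s. ennreal (f s x))" unfolding additive_def
        using add nn by (auto simp: ennreal_plus)
      show "\<And>A. A \<in> \<A> \<Longrightarrow> ennreal (f A x) \<noteq> \<infinity>" by simp
      fix A :: "nat \<Rightarrow> 'a set" assume A: "range A \<subseteq> \<A>" "decseq A" "(\<Inter>i. A i) = {}"
      have "(\<lambda>i. f (A i) x) \<longlonglongrightarrow> 0"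
      proof (rule compact_class_cont[where \<kappa>=kap and X=mtopology, OF \<A>(2) nn add _ _ A])
        show "\<And>A n. A \<in> \<A> \<Longrightarrow> kap A n \<in> \<A> \<and> kap A n \<subseteq> A \<and> compactin mtopology (kap A n) \<and> closedin mtopology (kap A n)"
          using kapA compact_closed by blast
        fix A :: "'a set" and \<delta> :: real assume A: "A \<in> \<A>" and \<delta>: "\<delta> > 0"
        obtain m :: nat where m: "1 / Suc m < \<delta>" using \<delta> by (metis nat_approx_posE)
        obtain n where "f (A - kap A n) x < 1 / Suc m" using Px A unfolding P_def by blast
        then show "\<exists>n. f (A - kap A n) x < \<delta>" using m by (intro exI[of _ n]) linarith
      qed
      then have "(\<lambda>i. ennreal (f (A i) x)) \<longlonglongrightarrow> ennreal 0" by (rule tendsto_ennrealI)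
      then show "(\<lambda>i. ennreal (f (A i) x)) \<longlonglongrightarrow> 0" by simp
    qed
  qed
  define mu where "mu x = (SOME \<mu>. (\<forall>s\<in>\<A>. \<mu> s = ennreal (f s x)) \<and> measure_space (space M) (sigma_sets (space M) \<A>) \<mu>)" for x
  have mu: "(\<forall>s\<in>\<A>. mu x s = ennreal (f s x)) \<and> measure_space (space M) (sets M) (mu x)" if "x \<in> G0" for x
    using someI_ex[OF ext[OF that]] \<A>(4) unfolding mu_def by simp
  define E where "E x = (if x \<in> G0 then measure_of (space M) (sets M) (mu x) else M)" for x
  have E_sets: "sets (E x) = sets M" for x
    unfolding E_def by (simp add: sets.sigma_sets_eq sets.space_closed)
  have E_space: "space (E x) = space M" for x
    unfolding E_def by (simp add: space_measure_of_conv)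
  have E_em: "emeasure (E x) A = mu x A" if "x \<in> G0" "A \<in> sets M" for x A
  proof -
    have "measure_space (space M) (sets M) (mu x)" using mu[OF that(1)] by simp
    then show ?thesis unfolding E_def using that
      by (simp add: emeasure_measure_of_sigma measure_space_def)
  qed
  have E_emA: "emeasure (E x) A = ennreal (f A x)" if "x \<in> G0" "A \<in> \<A>" for x A
    using E_em[OF that(1) AM[OF that(2)]] mu[OF that(1)] that(2) by simp
  have E_prob: "prob_space (E x)" for x
  proof (cases "x \<in> G0")
    case True
    have "f (space M) x = 1" using PG[OF True] unfolding P_def by simp
    then show ?thesis using E_emA[OF True topA] E_space by (intro prob_spaceI) simp
  next
    case False then show ?thesis unfolding E_def by (simp add: prob_space_axioms)
  qed
  have EF: "E \<in> Fm \<rightarrow>\<^sub>M prob_algebra M"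
  proof (rule measurable_prob_algebra_generated[where \<Omega>="space M" and G=\<A>])
    show "sets M = sigma_sets (space M) \<A>" by (rule \<A>(4))
    show "Int_stable \<A>" by (rule Aalg.Int_stable)
    show "\<A> \<subseteq> Pow (space M)" by (rule Aalg.space_closed)
    show "prob_space (E a)" for a by (rule E_prob)
    show "sets (E a) = sets M" for a by (rule E_sets)
    fix A assume A: "A \<in> \<A>"
    have mF: "(\<lambda>x. if x \<in> G0 then ennreal (f A x) else emeasure M A) \<in> borel_measurable Fm"
      by (rule measurable_If_set) (use G0B Gsp in \<open>auto simp: Int_absorb2\<close>)
    have eqE: "emeasure (E w) A = (if w \<in> G0 then ennreal (f A w) else emeasure M A)" for w
    proof (cases "w \<in> G0")
      case True then show ?thesis using E_emA[OF True A] by simp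
    next
      case False then show ?thesis by (simp add: E_def)
    qed
    have "(\<lambda>x. emeasure (E x) A) = (\<lambda>x. if x \<in> G0 then ennreal (f A x) else emeasure M A)"
      using eqE by blast
    then show "(\<lambda>x. emeasure (E x) A) \<in> borel_measurable Fm" using mF by simp
  qed
  have Emk: "markov_kernel M E" unfolding markov_kernel_def
    using measurable_from_subalg[OF subalg EF] .
  have "is_rcp M B E"
  proof (subst char, intro conjI ballI EF)
    fix C assume C: "C \<in> B"
    have CM: "C \<in> sets M" using C B_sub by auto
    show "bind (density M (indicator C)) E = density M (indicator C)"
    proof (rule dens_gen[OF Emk CM not_empty Aalg.Int_stable Aalg.space_closed \<A>(4) topA])
      show "emeasure M C \<noteq> \<infinity>" by simp
      fix A assume A: "A \<in> \<A>"
      have "(\<integral>\<^sup>+x. indicator C x * emeasure (E x) A \<partial>M) = (\<integral>\<^sup>+x. ennreal (indicator C x * f A x) \<partial>M)"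
      proof (rule nn_integral_cong_AE, rule AE_mp[OF aeG AE_I2], intro impI)
        fix x assume "x \<in> G0"
        then show "indicator C x * emeasure (E x) A = ennreal (indicator C x * f A x)"
          using E_emA[OF _ A] by (simp add: indicator_def)
      qed
      also have "\<dots> = ennreal (\<integral>x. indicator C x * f A x \<partial>M)"
      proof (rule nn_integral_eq_integral)
        show "integrable M (\<lambda>x. indicator C x * f A x)"
          using integrable_real_mult_indicator[OF CM f_int[OF AM[OF A]]] by (simp add: mult.commute)
        show "AE x in M. 0 \<le> indicator C x * f A x"
          using aeG by (rule AE_mp) (use PG A in \<open>auto simp: P_def intro!: AE_I2\<close>)
      qed
      also have "\<dots> = emeasure M (A \<inter> C)"
        using f_integral[OF AM[OF A] C] AM[OF A] CM by (simp add: emeasure_eq_measure)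
      finally show "(\<integral>\<^sup>+x. indicator C x * emeasure (E x) A \<partial>M) = emeasure M (A \<inter> C)" .
    qed
  qed
  then show ?thesis by blast
qed

end


lemma std_polish:
  assumes "prob_space M" "standard_borel M"
  obtains d where "polish_prob M d"
proof -
  from assms(2) obtain T where T: "topspace T = space M" "completely_metrizable_space T" "separable_space T"
      "sets M = sigma_sets (space M) {U. openin T U}"
    unfolding standard_borel_def by blast
  from T(2) obtain M' d where md: "Metric_space M' d" "Metric_space.mcomplete M' d" "T = Metric_space.mtopology M' d"
    unfolding completely_metrizable_space_def by blast
  have "M' = space M" using T(1) md Metric_space.topspace_mtopology by metis
  then have "polish_prob M d"
    using md T assms(1) unfolding polish_prob_def polish_prob_axioms_def by auto
  then show thesis by (rule that)
qed

lemma std_cgen: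
  assumes "prob_space M" "standard_borel M"
  shows "\<exists>G. cgen M G"
proof -
  obtain d where "polish_prob M d" using std_polish[OF assms] by blast
  then interpret polish_prob M d .
  obtain \<A> where \<A>: "countable \<A>" "algebra (space M) \<A>" "sets M = sigma_sets (space M) \<A>"
    using alg_exists by blast
  interpret algebra "space M" \<A> by (rule \<A>(2))
  have "cgen M \<A>" unfolding cgen_def using \<A> Int_stable space_closed top by auto
  then show ?thesis by blast
qed

lemma std_rcp_exists:
  assumes "prob_space M" "standard_borel M" "p_complete_subalgebra M B"
  shows "\<exists>e. is_rcp M B e"
proof -
  obtain d where "polish_prob M d" using std_polish[OF assms(1,2)] by blast
  then interpret polish_prob M d .
  interpret pcs M B using assms(3) by unfold_locales
  interpret pp M d B by unfold_locales
  show ?thesis by (rule rcp_exists)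
qed

theorem theorem4p16:
  fixes M :: "'a measure"
  assumes "prob_space M" and "standard_borel M"
  shows
    "(\<forall>e. mp_idempotent M e \<longrightarrow> p_complete_subalgebra M (inv_sets M e))
   \<and> (\<forall>e e'. mp_idempotent M e \<and> mp_idempotent M e' \<and> kernel_ae_eq M e e'
        \<longrightarrow> inv_sets M e = inv_sets M e')
   \<and> (\<forall>B. p_complete_subalgebra M B \<longrightarrow>
         (\<exists>e. is_rcp M B e)
       \<and> (\<forall>e e'. is_rcp M B e \<and> is_rcp M B e' \<longrightarrow> kernel_ae_eq M e e')
       \<and> (\<forall>e. is_rcp M B e \<longrightarrow> mp_idempotent M e \<and> inv_sets M e = B))
   \<and> (\<forall>e. mp_idempotent M e \<longrightarrow> is_rcp M (inv_sets M e) e)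
   \<and> (\<forall>e1 e2. mp_idempotent M e1 \<and> mp_idempotent M e2 \<longrightarrow>
         (idem_le M e1 e2 \<longleftrightarrow> inv_sets M e1 \<subseteq> inv_sets M e2))
   \<and> (\<forall>B1 B2 e1 e2. p_complete_subalgebra M B1 \<and> p_complete_subalgebra M B2
         \<and> is_rcp M B1 e1 \<and> is_rcp M B2 e2 \<longrightarrow> (B1 \<subseteq> B2 \<longleftrightarrow> idem_le M e1 e2))"
proof -
  interpret prob_space M by (rule assms(1))
  obtain G where G: "cgen M G" using std_cgen[OF assms] by auto
  have P1: "\<forall>e. mp_idempotent M e \<longrightarrow> p_complete_subalgebra M (inv_sets M e)"
    by (auto intro!: mp_pcomplete simp: mp_idempotent_def measure_preserving_kernel_def)
  have P2: "\<forall>e e'. mp_idempotent M e \<and> mp_idempotent M e' \<and> kernel_ae_eq M e e'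
        \<longrightarrow> inv_sets M e = inv_sets M e'"
    by (auto intro!: inv_sets_cong)
  have P3: "\<forall>B. p_complete_subalgebra M B \<longrightarrow>
         (\<exists>e. is_rcp M B e)
       \<and> (\<forall>e e'. is_rcp M B e \<and> is_rcp M B e' \<longrightarrow> kernel_ae_eq M e e')
       \<and> (\<forall>e. is_rcp M B e \<longrightarrow> mp_idempotent M e \<and> inv_sets M e = B)"
  proof (rule allI, rule impI)
    fix B assume B: "p_complete_subalgebra M B"
    interpret pcs M B using B by unfold_locales
    have "\<exists>e. is_rcp M B e" by (rule std_rcp_exists[OF assms B])
    moreover have "\<forall>e e'. is_rcp M B e \<and> is_rcp M B e' \<longrightarrow> kernel_ae_eq M e e'"
      using rcp_unique G by blast
    moreover have "\<forall>e. is_rcp M B e \<longrightarrow> mp_idempotent M e \<and> inv_sets M e = B"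
      using rcp_mp G rcp_inv_sets by blast
    ultimately show "(\<exists>e. is_rcp M B e)
       \<and> (\<forall>e e'. is_rcp M B e \<and> is_rcp M B e' \<longrightarrow> kernel_ae_eq M e e')
       \<and> (\<forall>e. is_rcp M B e \<longrightarrow> mp_idempotent M e \<and> inv_sets M e = B)" by blast
  qed
  have P4: "\<forall>e. mp_idempotent M e \<longrightarrow> is_rcp M (inv_sets M e) e"
    using mp_rcp by blast
  have P5: "\<forall>e1 e2. mp_idempotent M e1 \<and> mp_idempotent M e2 \<longrightarrow>
         (idem_le M e1 e2 \<longleftrightarrow> inv_sets M e1 \<subseteq> inv_sets M e2)"
    using idem_le_iff G by blast
  have P6: "\<forall>B1 B2 e1 e2. p_complete_subalgebra M B1 \<and> p_complete_subalgebra M B2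
         \<and> is_rcp M B1 e1 \<and> is_rcp M B2 e2 \<longrightarrow> (B1 \<subseteq> B2 \<longleftrightarrow> idem_le M e1 e2)"
  proof (intro allI impI)
    fix B1 B2 e1 e2 assume H: "p_complete_subalgebra M B1 \<and> p_complete_subalgebra M B2
         \<and> is_rcp M B1 e1 \<and> is_rcp M B2 e2"
    interpret b1: pcs M B1 using H by unfold_locales auto
    interpret b2: pcs M B2 using H by unfold_locales auto
    have "mp_idempotent M e1" "inv_sets M e1 = B1"
      using H b1.rcp_mp[OF _ G] b1.rcp_inv_sets by auto
    moreover have "mp_idempotent M e2" "inv_sets M e2 = B2"
      using H b2.rcp_mp[OF _ G] b2.rcp_inv_sets by auto
    ultimately show "B1 \<subseteq> B2 \<longleftrightarrow> idem_le M e1 e2" using idem_le_iff[OF _ _ G] by auto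
  qed
  show ?thesis using P1 P2 P3 P4 P5 P6 by blast
qed


end
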